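(* Fix $N>0$, $\lambda=(\lambda_1,\lambda_2)\in\mathbb{C}^2$ and $\tilde\lambda\in\mathbb{C}^2$, and put $p\cdot x:=\lambda_1[u\,\tilde\lambda]+\lambda_2[\hat u\,\tilde\lambda]$ and $$Q:=\frac{(p\cdot x)^2}{4}+N\lambda_1\lambda_2\frac{[u\,\tilde\lambda][\hat u\,\tilde\lambda]}{\|u\|^2}.$$ Let $C(Q)=\sum_{n\ge0}(-Q)^n/(2n)!$ and $S(Q)=\sum_{n\ge0}(-Q)^n/(2n+1)!$ (so $C=\cos\sqrt Q$, $S=\sin\sqrt Q/\sqrt Q$, entire in $Q$), and define $$\phi=e^{\frac{i}{2}p\cdot x}\Big(C(Q)+\frac{i\,p\cdot x}{2}\,S(Q)\Big).$$ Then: (i) $\Delta\phi=0$ on $\mathbb{C}^2\setminus\{0\}$; (ii) $\phi=\sum_{k,l\ge0}\frac{(i\lambda_1)^k(i\lambda_2)^l}{k!\,l!}\phi_{k,l}$, and equivalently $\phi=\sum_{j\ge0}\frac{1}{(2j)!}\big(-N\lambda_1\lambda_2\frac{[u\tilde\lambda][\hat u\tilde\lambda]}{\|u\|^2}\big)^j{}_1F_1(j+1;2j+1;\,i\,p\cdot x)$; (iii) at $N=0$, $\phi=e^{ip\cdot x}$; (iv) writing $u=t\zeta$ with $\zeta\in\mathbb{C}^2\setminus\{0\}$, $t\in\mathbb{C}^\times$, the limit $t\to0$ exists and equals $C\big(N\lambda_1\lambda_2[\zeta\,\tilde\lambda][\hat\zeta\,\tilde\lambda]/\|\zeta\|^2\big)$,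 so $\phi$ extends continuously to the blow-up of $\mathbb{C}^2$ at the origin; (v) $\phi$ is invariant under $(\lambda,\tilde\lambda)\mapsto(s\lambda,s^{-1}\tilde\lambda)$, $s\in\mathbb{C}^\times$.
   Context: Fix $N>0$. On $\mathbb{C}^2\setminus\{0\}$ with coordinates $u=(u^{\dot1},u^{\dot2})$ write $\|u\|^2=|u^{\dot1}|^2+|u^{\dot2}|^2$ and $\hat u=(-\bar u^{\dot2},\bar u^{\dot1})$. The Burns metric is $g_N=2(|du^{\dot1}|^2+|du^{\dot2}|^2)+2N|u^{\dot2}du^{\dot1}-u^{\dot1}du^{\dot2}|^2/\|u\|^4$; its Laplace–Beltrami operator is explicitly $$\Delta=\frac{2}{1+N/\|u\|^2}\Big(\sum_{a}\frac{\partial^2}{\partial u^{a}\partial\bar u^{a}}+\frac{N}{\|u\|^4}\Big(\sum_a u^a\frac{\partial}{\partial u^a}\Big)\Big(\sum_b\bar u^b\frac{\partial}{\partial\bar u^b}\Big)\Big).$$ For $\tilde\lambda\in\mathbb{C}^2$, $[u\,\tilde\lambda]:=u^{\dot1}\tilde\lambda_{\dot1}+u^{\dot2}\tilde\lambda_{\dot2}$ and $[\hat u\,\tilde\lambda]:=-\bar u^{\dot2}\tilde\lambda_{\dot1}+\bar u^{\dot1}\tilde\lambda_{\dot2}$. The functions $\phi_{k,l}$ are $\phi_{k,l}=\frac{k!\,l!}{(k+l)!}\sum_{j=0}^{\min(k,l)}\frac{(k+l-j)!}{j!(k-j)!(l-j)!}(N/\|u\|^2)^j[u\,\tilde\lambda]^k[\hat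 u\,\tilde\lambda]^l$. ${}_1F_1$ is the confluent hypergeometric function. *)

theory Defs
  imports "HOL-Analysis.Analysis"
begin

definition normsq :: "complex \<times> complex \<Rightarrow> real" where
  "normsq u = (cmod (fst u))^2 + (cmod (snd u))^2"

definition dirD :: "(complex \<times> complex \<Rightarrow> complex) \<Rightarrow> complex \<times> complex \<Rightarrow> complex \<times> complex \<Rightarrow> complex" where
  "dirD f u v = vector_derivative (\<lambda>t::real. f (u + t *\<^sub>R v)) (at 0)"

text \<open>Coordinate index a \<in> {1,2}.\<close>
definition ev :: "nat \<Rightarrow> complex \<times> complex" where
  "ev a = (if a = 1 then (1, 0) else (0, 1))"

definition cu :: "nat \<Rightarrow> complex \<times> complex \<Rightarrow> complex" where
  "cu a u = (if a = 1 then fst u else snd u)"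

definition dz :: "nat \<Rightarrow> (complex \<times> complex \<Rightarrow> complex) \<Rightarrow> complex \<times> complex \<Rightarrow> complex" where
  "dz a f u = (dirD f u (ev a) - \<i> * dirD f u (\<i> * fst (ev a), \<i> * snd (ev a))) / 2"

definition dzb :: "nat \<Rightarrow> (complex \<times> complex \<Rightarrow> complex) \<Rightarrow> complex \<times> complex \<Rightarrow> complex" where
  "dzb a f u = (dirD f u (ev a) + \<i> * dirD f u (\<i> * fst (ev a), \<i> * snd (ev a))) / 2"

text \<open>Laplace--Beltrami operator of the Burns metric g_N.\<close>
definition burns_laplacian :: "real \<Rightarrow> (complex \<times> complex \<Rightarrow> complex) \<Rightarrow> complex \<times> complex \<Rightarrow> complex" where
  "burns_laplacian N f u =
     of_real (2 / (1 + N / normsq u)) *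
     ((\<Sum>a\<in>{1,2}. dz a (dzb a f) u)
      + of_real (N / (normsq u)^2) *
        (\<Sum>a\<in>{1,2}. cu a u * dz a (\<lambda>w. \<Sum>b\<in>{1,2}. cnj (cu b w) * dzb b f w) u))"

definition br :: "complex \<times> complex \<Rightarrow> complex \<times> complex \<Rightarrow> complex" where
  "br u lt = fst u * fst lt + snd u * snd lt"

definition uhat :: "complex \<times> complex \<Rightarrow> complex \<times> complex" where
  "uhat u = (- cnj (snd u), cnj (fst u))"

definition brh :: "complex \<times> complex \<Rightarrow> complex \<times> complex \<Rightarrow> complex" where
  "brh u lt = br (uhat u) lt"

definition pdx :: "complex \<times> complex \<Rightarrow> complex \<times> complex \<Rightarrow> complex \<times> complex \<Rightarrow> complex" where
  "pdx l lt u = fst l * br u lt + snd l * brh u lt"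

definition Qf :: "real \<Rightarrow> complex \<times> complex \<Rightarrow> complex \<times> complex \<Rightarrow> complex \<times> complex \<Rightarrow> complex" where
  "Qf N l lt u = (pdx l lt u)^2 / 4
      + of_real N * fst l * snd l * br u lt * brh u lt / of_real (normsq u)"

definition Cser :: "complex \<Rightarrow> complex" where
  "Cser Q = (\<Sum>n. (- Q)^n / fact (2 * n))"

definition Sser :: "complex \<Rightarrow> complex" where
  "Sser Q = (\<Sum>n. (- Q)^n / fact (2 * n + 1))"

definition phi :: "real \<Rightarrow> complex \<times> complex \<Rightarrow> complex \<times> complex \<Rightarrow> complex \<times> complex \<Rightarrow> complex" where
  "phi N l lt u = exp (\<i> / 2 * pdx l lt u) *
      (Cser (Qf N l lt u) + \<i> * pdx l lt u / 2 * Sser (Qf N l lt u))"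

definition phikl :: "real \<Rightarrow> complex \<times> complex \<Rightarrow> nat \<Rightarrow> nat \<Rightarrow> complex \<times> complex \<Rightarrow> complex" where
  "phikl N lt k l u = fact k * fact l / fact (k + l) *
     (\<Sum>j=0..min k l. fact (k + l - j) / (fact j * fact (k - j) * fact (l - j))
        * (of_real (N / normsq u))^j * (br u lt)^k * (brh u lt)^l)"

definition hyp1F1 :: "complex \<Rightarrow> complex \<Rightarrow> complex \<Rightarrow> complex" where
  "hyp1F1 a b z = (\<Sum>n. pochhammer a n / pochhammer b n * z^n / fact n)"

end

theory Submission
  imports Defs
begin

definition cC :: "nat \<Rightarrow> complex" where "cC n = (-1)^n / fact (2*n)"
definition cS :: "nat \<Rightarrow> complex" where "cS n = (-1)^n / fact (2*n+1)"
definition Tser :: "complex \<Rightarrow> complex" where "Tser Q = (\<Sum>n. diffs cS n * Q^n)"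
definition User :: "complex \<Rightarrow> complex" where "User Q = (\<Sum>n. diffs (diffs cS) n * Q^n)"

lemma summable_fact_gen:
  fixes g :: "nat \<Rightarrow> nat"
  assumes "\<And>n. n \<le> g n"
  shows "summable (\<lambda>n. ((-1)^n / fact (g n) :: complex) * y^n)"
proof (rule summable_comparison_test)
  show "summable (\<lambda>n. norm y ^ n / fact n)"
    using summable_exp[of "norm y"] by (simp add: field_simps)
  show "\<exists>N. \<forall>n\<ge>N. norm ((-1)^n / fact (g n) * y^n) \<le> norm y ^ n / fact n"
  proof (intro exI allI impI)
    fix n :: nat
    have "(fact n :: real) \<le> fact (g n)" using assms fact_mono by blast
    hence "norm y ^ n / fact (g n) \<le> norm y ^ n / fact n"
      by (intro divide_left_mono) auto
    thus "norm ((-1)^n / fact (g n) * y^n) \<le> norm y ^ n / fact n"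
      by (simp add: norm_mult norm_divide norm_power)
  qed
qed

lemma summable_cC: "summable (\<lambda>n. cC n * y^n)"
  unfolding cC_def by (rule summable_fact_gen) auto
lemma summable_cS: "summable (\<lambda>n. cS n * y^n)"
  unfolding cS_def by (rule summable_fact_gen) auto
lemma summable_dS: "summable (\<lambda>n. diffs cS n * y^n)"
  by (rule termdiff_converges_all) (rule summable_cS)
lemma summable_ddS: "summable (\<lambda>n. diffs (diffs cS) n * y^n)"
  by (rule termdiff_converges_all) (rule summable_dS)

lemma neg_pow: "(- (Q::complex))^n = (-1)^n * Q^n"
  by (metis mult_minus1 power_mult_distrib)

lemma Cser_eq: "Cser Q = (\<Sum>n. cC n * Q^n)"
  unfolding Cser_def cC_def neg_pow[of Q] by (simp add: field_simps)
lemma Sser_eq: "Sser Q = (\<Sum>n. cS n * Q^n)"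
  unfolding Sser_def cS_def neg_pow[of Q] by (simp add: field_simps)

lemma diffs_cC: "diffs cC n = - cS n / 2"
proof -
  have f: "fact (2 * Suc n) = (of_nat (2*n+2) * fact (2*n+1) :: complex)"
    by (simp add: fact_Suc)
  have "diffs cC n = of_nat (Suc n) * ((-1)^Suc n / fact (2 * Suc n))"
    unfolding diffs_def cC_def ..
  also have "\<dots> = of_nat (Suc n) * ((-1)^Suc n / (of_nat (2*n+2) * fact (2*n+1)))"
    unfolding f ..
  also have "\<dots> = - cS n / 2" unfolding cS_def
  proof -
    have gen: "x \<noteq> 0 \<Longrightarrow> y \<noteq> 0 \<Longrightarrow> y * ((-1)^Suc n / ((2*y) * x)) = - ((-1)^n / x) / (2::complex)" for x y
      by (simp add: field_simps)
    have e: "(of_nat (2*n+2)::complex) = 2 * of_nat (Suc n)" by simp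
    show "of_nat (Suc n) * ((-1)^Suc n / (of_nat (2*n+2) * fact (2*n+1))) = - ((-1)^n / fact (2*n+1)) / (2::complex)"
    proof -
      have nz: "(of_nat (Suc n)::complex) \<noteq> 0" by (subst of_nat_eq_0_iff) simp
      show ?thesis unfolding e by (rule gen[OF fact_nonzero nz])
    qed
  qed
  finally show ?thesis .
qed

lemma Cser_deriv: "(Cser has_field_derivative (- Sser Q / 2)) (at Q)"
proof -
  have "(Cser has_field_derivative (\<Sum>n. diffs cC n * Q^n)) (at Q)"
    unfolding Cser_eq[abs_def] by (rule termdiffs_strong_converges_everywhere) (rule summable_cC)
  moreover have "(\<Sum>n. diffs cC n * Q^n) = - Sser Q / 2"
  proof -
    have "(\<lambda>n. - (cS n * Q^n) / 2) sums (- Sser Q / 2)"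
      unfolding Sser_eq by (rule sums_divide[OF sums_minus[OF summable_sums[OF summable_cS]]])
    thus ?thesis unfolding diffs_cC by (simp add: sums_iff)
  qed
  ultimately show ?thesis by simp
qed
lemma Sser_deriv: "(Sser has_field_derivative Tser Q) (at Q)"
  unfolding Sser_eq[abs_def] Tser_def by (rule termdiffs_strong_converges_everywhere) (rule summable_cS)
lemma Tser_deriv: "(Tser has_field_derivative User Q) (at Q)"
  unfolding User_def Tser_def by (rule termdiffs_strong_converges_everywhere) (rule summable_dS)

lemma rel1: "2 * Q * Tser Q = Cser Q - Sser Q"
proof -
  have "(\<lambda>n. cC n * Q^n - cS n * Q^n) sums (Cser Q - Sser Q)"
    unfolding Cser_eq Sser_eq by (rule sums_diff[OF summable_sums[OF summable_cC] summable_sums[OF summable_cS]])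
  hence "(\<lambda>n. cC (Suc n) * Q^Suc n - cS (Suc n) * Q^Suc n) sums (Cser Q - Sser Q)"
    by (subst sums_Suc_iff) (simp add: cC_def cS_def)
  moreover have "(\<lambda>n. cC (Suc n) * Q^Suc n - cS (Suc n) * Q^Suc n) = (\<lambda>n. 2 * Q * (diffs cS n * Q^n))"
  proof
    fix n
    have f1: "fact (2 * Suc n) = (of_nat (2*n+2) * fact (2*n+1) :: complex)"
      by (simp add: fact_Suc)
    have f2: "fact (2 * Suc n + 1) = (of_nat (2*n+3) * of_nat (2*n+2) * fact (2*n+1) :: complex)"
      by (simp add: fact_Suc)
    show "cC (Suc n) * Q^Suc n - cS (Suc n) * Q^Suc n = 2 * Q * (diffs cS n * Q^n)"
      unfolding diffs_def cC_def cS_def f1 f2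
    proof -
      have gen: "x \<noteq> 0 \<Longrightarrow> y \<noteq> 0 \<Longrightarrow> z \<noteq> 0 \<Longrightarrow> z = 2*y+1 \<Longrightarrow> (-1)^Suc n / ((2*y) * x) * Q^Suc n - (-1)^Suc n / (z * (2*y) * x) * Q^Suc n
         = 2 * Q * (y * ((-1)^Suc n / (z * (2*y) * x)) * Q^n)" for x y z :: complex
      proof -
        fix x y z :: complex assume h: "x \<noteq> 0" "y \<noteq> 0" "z \<noteq> 0" "z = 2*y+1"
        define w where "w = (-1)^Suc n / (z * (2*y) * x)"
        have 1: "(-1)^Suc n / ((2*y) * x) = z * w" unfolding w_def using h(3) by (simp add: field_simps)
        show "(-1)^Suc n / ((2*y) * x) * Q^Suc n - (-1)^Suc n / (z * (2*y) * x) * Q^Suc n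
         = 2 * Q * (y * ((-1)^Suc n / (z * (2*y) * x)) * Q^n)"
          unfolding 1 w_def[symmetric] using h(4) by (simp add: algebra_simps)
      qed
      have e: "(of_nat (2*n+2)::complex) = 2 * of_nat (Suc n)" by simp
      have e2: "(of_nat (2*n+3)::complex) \<noteq> 0" by (subst of_nat_eq_0_iff) simp
      show "(-1)^Suc n / (of_nat (2*n+2) * fact (2*n+1)) * Q^Suc n - (-1)^Suc n / (of_nat (2*n+3) * of_nat (2*n+2) * fact (2*n+1)) * Q^Suc n
         = 2 * Q * (of_nat (Suc n) * ((-1)^Suc n / (of_nat (2*n+3) * of_nat (2*n+2) * fact (2*n+1))) * Q^n)"
      proof -
        have nz: "(of_nat (Suc n)::complex) \<noteq> 0" by (subst of_nat_eq_0_iff) simp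
        show ?thesis unfolding e by (rule gen[OF fact_nonzero nz e2]) simp
      qed
    qed
  qed
  moreover have "(\<lambda>n. 2 * Q * (diffs cS n * Q^n)) sums (2 * Q * Tser Q)"
    unfolding Tser_def by (rule sums_mult[OF summable_sums[OF summable_dS]])
  ultimately show ?thesis using sums_unique2 by metis
qed

lemma rel2: "2 * Q * User Q = - Sser Q / 2 - 3 * Tser Q"
proof -
  have "((\<lambda>Q. 2 * Q * Tser Q) has_field_derivative (2 * Tser Q + 2 * Q * User Q)) (at Q)"
    by (auto intro!: derivative_eq_intros Tser_deriv)
  moreover have "((\<lambda>Q. Cser Q - Sser Q) has_field_derivative (- Sser Q / 2 - Tser Q)) (at Q)"
    by (auto intro!: derivative_eq_intros Cser_deriv Sser_deriv)
  ultimately have "2 * Tser Q + 2 * Q * User Q = - Sser Q / 2 - Tser Q"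
    using DERIV_unique rel1 by (metis (no_types, lifting) ext)
  thus ?thesis by algebra
qed

lemma Cser_sq: "Cser (s^2) = cos s"
proof -
  have "(\<lambda>n. cos_coeff (2 * n) *\<^sub>R s ^ (2 * n)) sums cos s"
    using cos_converges[of s]
    by (subst sums_mono_reindex[of "\<lambda>n. 2 * n"])
       (auto simp: strict_mono_def cos_coeff_def elim!: evenE)
  also have "(\<lambda>n. cos_coeff (2 * n) *\<^sub>R s ^ (2 * n)) = (\<lambda>n. (- (s^2))^n / fact (2*n))"
    unfolding neg_pow[of "s^2"] by (simp add: fun_eq_iff cos_coeff_def power_mult scaleR_conv_of_real)
  finally show ?thesis unfolding Cser_def by (simp add: sums_iff)
qed

lemma Sser_sq: "s * Sser (s^2) = sin s"
proof -
  have "(\<lambda>n. sin_coeff (2 * n + 1) *\<^sub>R s ^ (2 * n + 1)) sums sin s"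
    using sin_converges[of s]
    by (subst sums_mono_reindex[of "\<lambda>n. 2 * n + 1"])
       (auto simp: strict_mono_def sin_coeff_def elim!: oddE)
  also have "(\<lambda>n. sin_coeff (2 * n + 1) *\<^sub>R s ^ (2 * n + 1)) = (\<lambda>n. s * ((- (s^2))^n / fact (2*n+1)))"
    unfolding neg_pow[of "s^2"] by (simp add: fun_eq_iff sin_coeff_def power_mult scaleR_conv_of_real)
  finally have "(\<lambda>n. s * ((- (s^2))^n / fact (2*n+1))) sums sin s" .
  moreover have "(\<lambda>n. s * ((- (s^2))^n / fact (2*n+1))) sums (s * Sser (s^2))"
    unfolding Sser_def using summable_cS[of "s^2"] Sser_eq[of "s^2"] unfolding Sser_def
    by (intro sums_mult) (simp add: sums_iff cS_def neg_pow[of "s^2"])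
  ultimately show ?thesis using sums_unique2 by metis
qed

type_synonym c4 = "(complex \<times> complex) \<times> (complex \<times> complex)"

definition lin4 :: "complex \<Rightarrow> complex \<Rightarrow> complex \<Rightarrow> complex \<Rightarrow> c4 \<Rightarrow> complex" where
  "lin4 a b c d = (\<lambda>X. a * fst (fst X) + b * snd (fst X) + c * fst (snd X) + d * snd (snd X))"

definition D4 :: "(c4 \<Rightarrow> complex) \<Rightarrow> complex \<Rightarrow> complex \<Rightarrow> complex \<Rightarrow> complex \<Rightarrow> c4 \<Rightarrow> bool" where
  "D4 f a b c d X \<longleftrightarrow> (f has_derivative lin4 a b c d) (at X)"

lemma D4_cong: "D4 f a b c d X \<Longrightarrow> a = a' \<Longrightarrow> b = b' \<Longrightarrow> c = c' \<Longrightarrow> d = d' \<Longrightarrow> D4 f a' b' c' d' X"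
  by simp

lemma D4_const: "D4 (\<lambda>X. k) 0 0 0 0 X"
  unfolding D4_def lin4_def by (rule has_derivative_eq_rhs, rule has_derivative_const) auto
lemma D4_x1: "D4 (\<lambda>X. fst (fst X)) 1 0 0 0 X"
  unfolding D4_def lin4_def by (rule has_derivative_eq_rhs, (rule derivative_intros)+) auto
lemma D4_x2: "D4 (\<lambda>X. snd (fst X)) 0 1 0 0 X"
  unfolding D4_def lin4_def by (rule has_derivative_eq_rhs, (rule derivative_intros)+) auto
lemma D4_y1: "D4 (\<lambda>X. fst (snd X)) 0 0 1 0 X"
  unfolding D4_def lin4_def by (rule has_derivative_eq_rhs, (rule derivative_intros)+) auto
lemma D4_y2: "D4 (\<lambda>X. snd (snd X)) 0 0 0 1 X"
  unfolding D4_def lin4_def by (rule has_derivative_eq_rhs, (rule derivative_intros)+) auto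

lemma D4_add: assumes "D4 f a b c d X" "D4 g a' b' c' d' X" shows "D4 (\<lambda>X. f X + g X) (a+a') (b+b') (c+c') (d+d') X"
  using has_derivative_add[OF assms[unfolded D4_def]] unfolding D4_def
  by (rule has_derivative_eq_rhs) (auto simp: lin4_def fun_eq_iff algebra_simps)
lemma D4_diff: assumes "D4 f a b c d X" "D4 g a' b' c' d' X" shows "D4 (\<lambda>X. f X - g X) (a-a') (b-b') (c-c') (d-d') X"
  using has_derivative_diff[OF assms[unfolded D4_def]] unfolding D4_def
  by (rule has_derivative_eq_rhs) (auto simp: lin4_def fun_eq_iff algebra_simps)
lemma D4_mult: assumes "D4 f a b c d X" "D4 g a' b' c' d' X" shows
   "D4 (\<lambda>X. f X * g X) (f X * a' + a * g X) (f X * b' + b * g X) (f X * c' + c * g X) (f X * d' + d * g X) X"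
  using has_derivative_mult[OF assms[unfolded D4_def]] unfolding D4_def
  by (rule has_derivative_eq_rhs) (auto simp: lin4_def fun_eq_iff algebra_simps)
lemma D4_inverse: assumes "D4 f a b c d X" "f X \<noteq> 0" shows
   "D4 (\<lambda>X. inverse (f X)) (- a / (f X)^2) (- b / (f X)^2) (- c / (f X)^2) (- d / (f X)^2) X"
  using Deriv.has_derivative_inverse[OF assms(2) assms(1)[unfolded D4_def]] unfolding D4_def
  by (rule has_derivative_eq_rhs) (simp add: lin4_def fun_eq_iff power2_eq_square divide_inverse algebra_simps)

lemma D4_comp2:
  assumes "(F has_derivative (\<lambda>z. Fp * fst z + Fm * snd z)) (at (p X, m X))"
    and "D4 p a b c d X" "D4 m a' b' c' d' X"
  shows "D4 (\<lambda>X. F (p X, m X)) (Fp*a + Fm*a') (Fp*b + Fm*b') (Fp*c + Fm*c') (Fp*d + Fm*d') X"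
proof -
  have "((\<lambda>X. (p X, m X)) has_derivative (\<lambda>h. (lin4 a b c d h, lin4 a' b' c' d' h))) (at X)"
    using assms(2,3) unfolding D4_def by (rule has_derivative_Pair)
  from has_derivative_compose[OF this assms(1)]
  show ?thesis unfolding D4_def
    by (rule has_derivative_eq_rhs) (auto simp: lin4_def fun_eq_iff algebra_simps)
qed

lemma D4_comp1:
  assumes "(F has_field_derivative Fp) (at (p X))" and "D4 p a b c d X"
  shows "D4 (\<lambda>X. F (p X)) (Fp*a) (Fp*b) (Fp*c) (Fp*d) X"
proof -
  have "(F has_derivative (\<lambda>h. h * Fp)) (at (p X))" using assms(1)
    by (simp add: has_field_derivative_def mult.commute[of _ Fp])
  from has_derivative_compose[OF assms(2)[unfolded D4_def] this]
  show ?thesis unfolding D4_def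
    by (rule has_derivative_eq_rhs) (auto simp: lin4_def fun_eq_iff algebra_simps)
qed

definition cj :: "complex \<times> complex \<Rightarrow> complex \<times> complex" where
  "cj w = (cnj (fst w), cnj (snd w))"

lemma dirD_formula:
  assumes K: "D4 K a b c d (u, cj u)" and ev: "\<forall>\<^sub>F w in nhds u. g w = K (w, cj w)"
  shows "dirD g u v = a * fst v + b * snd v + c * cnj (fst v) + d * cnj (snd v)"
proof -
  define l where "l = (\<lambda>t::real. (u + t *\<^sub>R v, cj (u + t *\<^sub>R v)))"
  have l: "l = (\<lambda>t. (u, cj u) + t *\<^sub>R (v, cj v))"
    by (auto simp: l_def cj_def fun_eq_iff scaleR_conv_of_real)
  have "(l has_derivative (\<lambda>t. t *\<^sub>R (v, cj v))) (at 0)"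
    unfolding l by (rule has_derivative_eq_rhs, (rule derivative_intros)+) auto
  moreover have "(K has_derivative lin4 a b c d) (at (l 0))"
    using K by (simp add: D4_def l_def)
  ultimately have "((\<lambda>t. K (l t)) has_derivative (\<lambda>t. lin4 a b c d (t *\<^sub>R (v, cj v)))) (at 0)"
    by (rule has_derivative_compose)
  hence 1: "((\<lambda>t. K (l t)) has_vector_derivative lin4 a b c d (v, cj v)) (at 0)"
    unfolding has_vector_derivative_def
    by (rule has_derivative_eq_rhs) (auto simp: lin4_def fun_eq_iff cj_def scaleR_conv_of_real algebra_simps)
  have lim: "((\<lambda>t::real. u + t *\<^sub>R v) \<longlongrightarrow> u) (at 0)"
    by (rule tendsto_eq_intros | simp)+
  have ev0: "g u = K (u, cj u)" using eventually_nhds_x_imp_x[OF ev] .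
  have evt: "\<forall>\<^sub>F t in at 0. K (l t) = g (u + t *\<^sub>R v)"
    using eventually_compose_filterlim[OF ev lim] unfolding l_def by (simp add: eq_commute)
  have "((\<lambda>t. g (u + t *\<^sub>R v)) has_vector_derivative lin4 a b c d (v, cj v)) (at 0)"
    using has_derivative_transform_eventually[OF 1[unfolded has_vector_derivative_def] evt]
    unfolding has_vector_derivative_def by (simp add: l_def ev0)
  thus ?thesis unfolding dirD_def by (simp add: vector_derivative_at lin4_def cj_def)
qed

lemma wirt:
  assumes K: "D4 K a b c d (u, cj u)" and ev: "\<forall>\<^sub>F w in nhds u. g w = K (w, cj w)"
  shows "dz 1 g u = a" "dz 2 g u = b" "dzb 1 g u = c" "dzb 2 g u = d"
  using dirD_formula[OF K ev]
  by (simp_all add: dz_def dzb_def ev_def field_simps)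

definition xA :: "complex \<Rightarrow> complex \<Rightarrow> c4 \<Rightarrow> complex" where
  "xA t1 t2 X = fst (fst X) * t1 + snd (fst X) * t2"
definition xB :: "complex \<Rightarrow> complex \<Rightarrow> c4 \<Rightarrow> complex" where
  "xB t1 t2 X = fst (snd X) * t2 - snd (snd X) * t1"
definition xR :: "c4 \<Rightarrow> complex" where
  "xR X = fst (fst X) * fst (snd X) + snd (fst X) * snd (snd X)"
definition xP :: "complex \<Rightarrow> complex \<Rightarrow> complex \<Rightarrow> complex \<Rightarrow> c4 \<Rightarrow> complex" where
  "xP l1 l2 t1 t2 X = l1 * xA t1 t2 X + l2 * xB t1 t2 X"
definition xM :: "complex \<Rightarrow> complex \<Rightarrow> complex \<Rightarrow> c4 \<Rightarrow> complex" where
  "xM k t1 t2 X = k * xA t1 t2 X * xB t1 t2 X * inverse (xR X)"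

lemma dA: "D4 (xA t1 t2) t1 t2 0 0 X"
  unfolding xA_def[abs_def]
  by (rule D4_cong[OF D4_add[OF D4_mult[OF D4_x1 D4_const] D4_mult[OF D4_x2 D4_const]]]) simp_all
lemma dB: "D4 (xB t1 t2) 0 0 t2 (-t1) X"
  unfolding xB_def[abs_def]
  by (rule D4_cong[OF D4_diff[OF D4_mult[OF D4_y1 D4_const] D4_mult[OF D4_y2 D4_const]]]) simp_all
lemma dR: "D4 xR (fst (snd X)) (snd (snd X)) (fst (fst X)) (snd (fst X)) X"
  unfolding xR_def[abs_def]
  by (rule D4_cong[OF D4_add[OF D4_mult[OF D4_x1 D4_y1] D4_mult[OF D4_x2 D4_y2]]]) simp_all
lemma dP: "D4 (xP l1 l2 t1 t2) (l1*t1) (l1*t2) (l2*t2) (-l2*t1) X"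
  unfolding xP_def[abs_def]
  by (rule D4_cong[OF D4_add[OF D4_mult[OF D4_const dA] D4_mult[OF D4_const dB]]]) simp_all

definition Mx1 where "Mx1 k t1 t2 X = k * (t1 * xB t1 t2 X * xR X - xA t1 t2 X * xB t1 t2 X * fst (snd X)) / (xR X)^2"
definition Mx2 where "Mx2 k t1 t2 X = k * (t2 * xB t1 t2 X * xR X - xA t1 t2 X * xB t1 t2 X * snd (snd X)) / (xR X)^2"
definition My1 where "My1 k t1 t2 X = k * xA t1 t2 X * (t2 * xR X - xB t1 t2 X * fst (fst X)) / (xR X)^2"
definition My2 where "My2 k t1 t2 X = k * xA t1 t2 X * (- t1 * xR X - xB t1 t2 X * snd (fst X)) / (xR X)^2"

lemma dM: assumes "xR X \<noteq> 0"
  shows "D4 (xM k t1 t2) (Mx1 k t1 t2 X) (Mx2 k t1 t2 X) (My1 k t1 t2 X) (My2 k t1 t2 X) X"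
  unfolding xM_def[abs_def]
  by (rule D4_cong[OF D4_mult[OF D4_mult[OF D4_mult[OF D4_const dA] dB] D4_inverse[OF dR assms]]])
     (use assms in \<open>simp_all add: Mx1_def Mx2_def My1_def My2_def field_simps power2_eq_square\<close>)

definition Dx :: "(c4 \<Rightarrow> complex) \<Rightarrow> complex \<Rightarrow> complex \<Rightarrow> c4 \<Rightarrow> bool" where
  "Dx f a b X \<longleftrightarrow> (\<exists>c d. D4 f a b c d X)"

lemma Dx_D4: "D4 f a b c d X \<Longrightarrow> Dx f a b X" unfolding Dx_def by blast
lemma Dx_cong: "Dx f a b X \<Longrightarrow> a = a' \<Longrightarrow> b = b' \<Longrightarrow> Dx f a' b' X" by simp
lemma Dx_add: "Dx f a b X \<Longrightarrow> Dx g a' b' X \<Longrightarrow> Dx (\<lambda>X. f X + g X) (a+a') (b+b') X"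
  unfolding Dx_def using D4_add by blast
lemma Dx_diff: "Dx f a b X \<Longrightarrow> Dx g a' b' X \<Longrightarrow> Dx (\<lambda>X. f X - g X) (a-a') (b-b') X"
  unfolding Dx_def using D4_diff by blast
lemma Dx_mult: "Dx f a b X \<Longrightarrow> Dx g a' b' X \<Longrightarrow> Dx (\<lambda>X. f X * g X) (f X * a' + a * g X) (f X * b' + b * g X) X"
  unfolding Dx_def using D4_mult by blast
lemma Dx_comp2:
  assumes "(F has_derivative (\<lambda>z. Fp * fst z + Fm * snd z)) (at (p X, m X))"
    and "Dx p a b X" "Dx m a' b' X"
  shows "Dx (\<lambda>X. F (p X, m X)) (Fp*a + Fm*a') (Fp*b + Fm*b') X"
  using assms unfolding Dx_def using D4_comp2 by blast
lemma Dx_inverse: "Dx f a b X \<Longrightarrow> f X \<noteq> 0 \<Longrightarrow> Dx (\<lambda>X. inverse (f X)) (- a / (f X)^2) (- b / (f X)^2) X"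
  unfolding Dx_def using D4_inverse by blast

definition dMy :: "complex \<Rightarrow> complex \<Rightarrow> complex \<Rightarrow> nat \<Rightarrow> nat \<Rightarrow> c4 \<Rightarrow> complex" where
  "dMy k t1 t2 c q X = (let a = xA t1 t2 X; b = xB t1 t2 X; r = xR X;
      tc = (if c = 1 then t1 else t2); yc = (if c = 1 then fst (snd X) else snd (snd X));
      Bq = (if q = 1 then t2 else - t1); xq = (if q = 1 then fst (fst X) else snd (fst X));
      d = (if c = q then 1 else 0) in
     k * tc * (Bq * r - b * xq) / r^2 + k * a * (Bq * yc - b * d) / r^2 - 2 * k * a * (Bq * r - b * xq) * yc / r^3)"

lemma My1_alt: "My1 k t1 t2 = (\<lambda>X. k * xA t1 t2 X * (t2 * xR X - xB t1 t2 X * fst (fst X)) * (inverse (xR X) * inverse (xR X)))"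
  by (auto simp: My1_def fun_eq_iff divide_inverse power2_eq_square)
lemma My2_alt: "My2 k t1 t2 = (\<lambda>X. k * xA t1 t2 X * (- t1 * xR X - xB t1 t2 X * snd (fst X)) * (inverse (xR X) * inverse (xR X)))"
  by (auto simp: My2_def fun_eq_iff divide_inverse power2_eq_square)

lemma dMy1: assumes "xR X \<noteq> 0" shows "Dx (My1 k t1 t2) (dMy k t1 t2 1 1 X) (dMy k t1 t2 2 1 X) X"
  unfolding My1_alt
  by (rule Dx_cong[OF Dx_mult[OF Dx_mult[OF Dx_mult[OF Dx_D4[OF D4_const] Dx_D4[OF dA]]
        Dx_diff[OF Dx_mult[OF Dx_D4[OF D4_const] Dx_D4[OF dR]] Dx_mult[OF Dx_D4[OF dB] Dx_D4[OF D4_x1]]]]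
        Dx_mult[OF Dx_inverse[OF Dx_D4[OF dR] assms] Dx_inverse[OF Dx_D4[OF dR] assms]]]])
     (use assms in \<open>simp_all add: dMy_def Let_def field_simps power2_eq_square power3_eq_cube\<close>)

lemma dMy2: assumes "xR X \<noteq> 0" shows "Dx (My2 k t1 t2) (dMy k t1 t2 1 2 X) (dMy k t1 t2 2 2 X) X"
  unfolding My2_alt
  by (rule Dx_cong[OF Dx_mult[OF Dx_mult[OF Dx_mult[OF Dx_D4[OF D4_const] Dx_D4[OF dA]]
        Dx_diff[OF Dx_mult[OF Dx_D4[OF D4_const] Dx_D4[OF dR]] Dx_mult[OF Dx_D4[OF dB] Dx_D4[OF D4_x2]]]]
        Dx_mult[OF Dx_inverse[OF Dx_D4[OF dR] assms] Dx_inverse[OF Dx_D4[OF dR] assms]]]])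
     (use assms in \<open>simp_all add: dMy_def Let_def field_simps power2_eq_square power3_eq_cube\<close>)

definition hca :: "complex \<Rightarrow> complex \<Rightarrow> complex \<Rightarrow> complex \<Rightarrow> complex \<Rightarrow> complex \<Rightarrow> complex \<Rightarrow> complex \<Rightarrow> complex \<Rightarrow> nat \<Rightarrow> nat \<Rightarrow> c4 \<Rightarrow> complex" where
  "hca l1 l2 k t1 t2 Fm Fpp Fpm Fmm c q X =
    (let Pxc = (if c = 1 then l1 * t1 else l1 * t2);
         Mxc = (if c = 1 then Mx1 k t1 t2 X else Mx2 k t1 t2 X);
         Pyq = (if q = 1 then l2 * t2 else - l2 * t1);
         Myq = (if q = 1 then My1 k t1 t2 X else My2 k t1 t2 X) in
     (Fpp * Pxc + Fpm * Mxc) * Pyq + (Fpm * Pxc + Fmm * Mxc) * Myq + Fm * dMy k t1 t2 c q X)"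

definition "dM0 k a b r tc Bq xq yc d = k * tc * (Bq * r - b * xq) / r^2 + k * a * (Bq * yc - b * d) / r^2 - 2 * k * a * (Bq * r - b * xq) * yc / r^3"

context
  fixes x1 x2 y1 y2 t1 t2 k a b r :: complex
  assumes r: "r \<noteq> 0" and ha: "a = x1*t1 + x2*t2" and hb: "b = y1*t2 - y2*t1" and hr: "r = x1*y1 + x2*y2"
begin

lemma sMxMy0: "k*(t1*b*r - a*b*y1)/r^2 * (k*a*(t2*r - b*x1)/r^2) + k*(t2*b*r - a*b*y2)/r^2 * (k*a*(-t1*r - b*x2)/r^2)
   = - k * k * a^2 * b^2 / r^3"
  using r apply (simp add: field_simps power2_eq_square power3_eq_cube)
  apply (simp only: ha hb hr) by algebra

lemma sPxMy0: "(l1*t1) * (k*a*(t2*r - b*x1)/r^2) + (l1*t2) * (k*a*(-t1*r - b*x2)/r^2)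
   = - l1 * k * a^2 * b / r^2"
  using r apply (simp add: field_simps power2_eq_square power3_eq_cube)
  apply (simp only: ha hb hr) by algebra

lemma sMxPy0: "k*(t1*b*r - a*b*y1)/r^2 * (l2*t2) + k*(t2*b*r - a*b*y2)/r^2 * (-l2*t1)
   = - l2 * k * a * b^2 / r^2"
  using r apply (simp add: field_simps power2_eq_square power3_eq_cube)
  apply (simp only: ha hb hr) by algebra

lemma sxMx0: "x1 * (k*(t1*b*r - a*b*y1)/r^2) + x2 * (k*(t2*b*r - a*b*y2)/r^2) = 0"
  using r apply (simp add: field_simps power2_eq_square power3_eq_cube)
  apply (simp only: ha hb hr) by algebra

lemma syMy0: "y1 * (k*a*(t2*r - b*x1)/r^2) + y2 * (k*a*(-t1*r - b*x2)/r^2) = 0"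
  using r apply (simp add: field_simps power2_eq_square power3_eq_cube)
  apply (simp only: ha hb hr) by algebra

lemma sdMy0: "dM0 k a b r t1 t2 x1 y1 1 + dM0 k a b r t2 (-t1) x2 y2 1 = - 2 * k * a * b / r^2"
  using r unfolding dM0_def apply (simp add: field_simps power2_eq_square power3_eq_cube)
  apply (simp only: ha hb hr) by algebra

lemma sxydMy0: "x1 * (y1 * dM0 k a b r t1 t2 x1 y1 1 + y2 * dM0 k a b r t1 (-t1) x2 y1 0) + x2 * (y1 * dM0 k a b r t2 t2 x1 y2 0 + y2 * dM0 k a b r t2 (-t1) x2 y2 1) = 0"
  using r unfolding dM0_def apply (simp add: field_simps power2_eq_square power3_eq_cube)
  apply (simp only: ha hb hr) by algebra

end


lemma lap_alg:
  fixes x1 x2 y1 y2 :: complex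
  assumes X: "X = ((x1, x2), (y1, y2))" and r: "xR X \<noteq> 0" and k: "k = N * l1 * l2"
  shows "hca l1 l2 k t1 t2 Fm Fpp Fpm Fmm 1 1 X + hca l1 l2 k t1 t2 Fm Fpp Fpm Fmm 2 2 X
     + N / (xR X)^2 * (x1 * (y1 * hca l1 l2 k t1 t2 Fm Fpp Fpm Fmm 1 1 X + y2 * hca l1 l2 k t1 t2 Fm Fpp Fpm Fmm 1 2 X)
                     + x2 * (y1 * hca l1 l2 k t1 t2 Fm Fpp Fpm Fmm 2 1 X + y2 * hca l1 l2 k t1 t2 Fm Fpp Fpm Fmm 2 2 X))
   = xM k t1 t2 X / xR X * (Fpp - xP l1 l2 t1 t2 X * Fpm - 2 * Fm - xM k t1 t2 X * Fmm)"
proof -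
  define a where "a = xA t1 t2 X"
  define b where "b = xB t1 t2 X"
  define rr where "rr = xR X"
  have ha: "a = x1*t1 + x2*t2" unfolding a_def xA_def X by simp
  have hb: "b = y1*t2 - y2*t1" unfolding b_def xB_def X by simp
  have hr: "rr = x1*y1 + x2*y2" unfolding rr_def xR_def X by simp
  have r0: "rr \<noteq> 0" using r rr_def by simp
  note L = sMxMy0[OF r0 ha hb hr] sPxMy0[OF r0 ha hb hr] sMxPy0[OF r0 ha hb hr] sxMx0[OF r0 ha hb hr]
           syMy0[OF r0 ha hb hr] sdMy0[OF r0 ha hb hr] sxydMy0[OF r0 ha hb hr]
  have mx1: "Mx1 k t1 t2 X = k*(t1*b*rr - a*b*y1)/rr^2" unfolding Mx1_def a_def b_def rr_def X by simp
  have mx2: "Mx2 k t1 t2 X = k*(t2*b*rr - a*b*y2)/rr^2" unfolding Mx2_def a_def b_def rr_def X by simp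
  have my1: "My1 k t1 t2 X = k*a*(t2*rr - b*x1)/rr^2" unfolding My1_def a_def b_def rr_def X by simp
  have my2: "My2 k t1 t2 X = k*a*(-t1*rr - b*x2)/rr^2" unfolding My2_def a_def b_def rr_def X by simp
  have dm: "dMy k t1 t2 c q X = dM0 k a b rr (if c = 1 then t1 else t2) (if q = 1 then t2 else - t1)
               (if q = 1 then x1 else x2) (if c = 1 then y1 else y2) (if c = q then 1 else 0)" for c q
    unfolding dMy_def dM0_def a_def b_def rr_def X Let_def by simp
  define MM where "MM = k*(t1*b*rr - a*b*y1)/rr^2 * (k*a*(t2*rr - b*x1)/rr^2) + k*(t2*b*rr - a*b*y2)/rr^2 * (k*a*(-t1*rr - b*x2)/rr^2)"
  define PM where "PM = (l1*t1) * (k*a*(t2*rr - b*x1)/rr^2) + (l1*t2) * (k*a*(-t1*rr - b*x2)/rr^2)"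
  define MP where "MP = k*(t1*b*rr - a*b*y1)/rr^2 * (l2*t2) + k*(t2*b*rr - a*b*y2)/rr^2 * (-l2*t1)"
  define XM where "XM = x1 * (k*(t1*b*rr - a*b*y1)/rr^2) + x2 * (k*(t2*b*rr - a*b*y2)/rr^2)"
  define YM where "YM = y1 * (k*a*(t2*rr - b*x1)/rr^2) + y2 * (k*a*(-t1*rr - b*x2)/rr^2)"
  define DD where "DD = dM0 k a b rr t1 t2 x1 y1 1 + dM0 k a b rr t2 (-t1) x2 y2 1"
  define XYD where "XYD = x1 * (y1 * dM0 k a b rr t1 t2 x1 y1 1 + y2 * dM0 k a b rr t1 (-t1) x2 y1 0) + x2 * (y1 * dM0 k a b rr t2 t2 x1 y2 0 + y2 * dM0 k a b rr t2 (-t1) x2 y2 1)"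
  have step: "hca l1 l2 k t1 t2 Fm Fpp Fpm Fmm 1 1 X + hca l1 l2 k t1 t2 Fm Fpp Fpm Fmm 2 2 X
     + N / (xR X)^2 * (x1 * (y1 * hca l1 l2 k t1 t2 Fm Fpp Fpm Fmm 1 1 X + y2 * hca l1 l2 k t1 t2 Fm Fpp Fpm Fmm 1 2 X)
                     + x2 * (y1 * hca l1 l2 k t1 t2 Fm Fpp Fpm Fmm 2 1 X + y2 * hca l1 l2 k t1 t2 Fm Fpp Fpm Fmm 2 2 X))
     = Fpm * MP + Fpm * PM + Fmm * MM + Fm * DD
       + N / rr^2 * (Fpp * (l1 * a) * (l2 * b) + Fpm * XM * (l2 * b) + Fpm * (l1 * a) * YM + Fmm * XM * YM + Fm * XYD)"
    unfolding hca_def Let_def rr_def[symmetric] MM_def PM_def MP_def XM_def YM_def DD_def XYD_def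
    apply (simp add: mx1 mx2 my1 my2 dm divide_inverse flip: power_inverse)
    unfolding ha hb by algebra
  have fin: "Fpm * MP + Fpm * PM + Fmm * MM + Fm * DD
       + N / rr^2 * (Fpp * (l1 * a) * (l2 * b) + Fpm * XM * (l2 * b) + Fpm * (l1 * a) * YM + Fmm * XM * YM + Fm * XYD)
      = (k * a * b / rr) / rr * (Fpp - (l1 * a + l2 * b) * Fpm - 2 * Fm - (k * a * b / rr) * Fmm)"
    unfolding MM_def PM_def MP_def XM_def YM_def DD_def XYD_def L
    using r0 unfolding k by (simp add: field_simps power2_eq_square power3_eq_cube)
  show ?thesis unfolding step fin
    by (simp add: xM_def xP_def a_def b_def rr_def divide_inverse)
qed

lemma wirt_Dx:
  assumes K: "Dx K a b (u, cj u)" and ev: "\<forall>\<^sub>F w in nhds u. g w = K (w, cj w)"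
  shows "dz 1 g u = a" "dz 2 g u = b"
  using K wirt[OF _ ev] unfolding Dx_def by blast+

definition Hy1 where "Hy1 Fp Fm l1 l2 k t1 t2 X = Fp (xP l1 l2 t1 t2 X, xM k t1 t2 X) * (l2*t2) + Fm (xP l1 l2 t1 t2 X, xM k t1 t2 X) * My1 k t1 t2 X"
definition Hy2 where "Hy2 Fp Fm l1 l2 k t1 t2 X = Fp (xP l1 l2 t1 t2 X, xM k t1 t2 X) * (-l2*t1) + Fm (xP l1 l2 t1 t2 X, xM k t1 t2 X) * My2 k t1 t2 X"

lemma xR_cj: "xR (w, cj w) = of_real (normsq w)"
proof -
  have "fst w * cnj (fst w) = of_real ((cmod (fst w))^2)" "snd w * cnj (snd w) = of_real ((cmod (snd w))^2)"
    using complex_norm_square by metis+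
  thus ?thesis unfolding xR_def cj_def normsq_def by simp
qed

lemma normsq_pos: "w \<noteq> 0 \<Longrightarrow> normsq w > 0"
  unfolding normsq_def by (cases w) (auto simp: zero_prod_def add_pos_nonneg add_nonneg_pos)

lemma xR_nz: "w \<noteq> 0 \<Longrightarrow> xR (w, cj w) \<noteq> 0"
  using normsq_pos[of w] by (simp add: xR_cj)

context
  fixes F Fp Fm Fpp Fpm Fmm :: "complex \<times> complex \<Rightarrow> complex" and l1 l2 k t1 t2 :: complex
  assumes hF: "\<And>z. (F has_derivative (\<lambda>z'. Fp z * fst z' + Fm z * snd z')) (at z)"
    and hFp: "\<And>z. (Fp has_derivative (\<lambda>z'. Fpp z * fst z' + Fpm z * snd z')) (at z)"
    and hFm: "\<And>z. (Fm has_derivative (\<lambda>z'. Fpm z * fst z' + Fmm z * snd z')) (at z)"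
begin

lemma dH: assumes "xR X \<noteq> 0"
  shows "\<exists>a b. D4 (\<lambda>X. F (xP l1 l2 t1 t2 X, xM k t1 t2 X)) a b (Hy1 Fp Fm l1 l2 k t1 t2 X) (Hy2 Fp Fm l1 l2 k t1 t2 X) X"
  unfolding Hy1_def Hy2_def
  by (intro exI, rule D4_cong[OF D4_comp2[OF hF dP[of l1 l2 t1 t2] dM[OF assms, of k t1 t2]]]) (simp_all add: algebra_simps)

lemma dHy1: assumes "xR X \<noteq> 0"
  shows "Dx (Hy1 Fp Fm l1 l2 k t1 t2)
     (hca l1 l2 k t1 t2 (Fm (xP l1 l2 t1 t2 X, xM k t1 t2 X)) (Fpp (xP l1 l2 t1 t2 X, xM k t1 t2 X)) (Fpm (xP l1 l2 t1 t2 X, xM k t1 t2 X)) (Fmm (xP l1 l2 t1 t2 X, xM k t1 t2 X)) 1 1 X)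
     (hca l1 l2 k t1 t2 (Fm (xP l1 l2 t1 t2 X, xM k t1 t2 X)) (Fpp (xP l1 l2 t1 t2 X, xM k t1 t2 X)) (Fpm (xP l1 l2 t1 t2 X, xM k t1 t2 X)) (Fmm (xP l1 l2 t1 t2 X, xM k t1 t2 X)) 2 1 X) X"
  unfolding Hy1_def[abs_def]
  by (rule Dx_cong[OF Dx_add[OF Dx_mult[OF Dx_comp2[OF hFp Dx_D4[OF dP] Dx_D4[OF dM[OF assms]]] Dx_D4[OF D4_const]]
        Dx_mult[OF Dx_comp2[OF hFm Dx_D4[OF dP] Dx_D4[OF dM[OF assms]]] dMy1[OF assms]]]])
     (simp_all add: hca_def Let_def algebra_simps)

lemma dHy2: assumes "xR X \<noteq> 0"
  shows "Dx (Hy2 Fp Fm l1 l2 k t1 t2)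
     (hca l1 l2 k t1 t2 (Fm (xP l1 l2 t1 t2 X, xM k t1 t2 X)) (Fpp (xP l1 l2 t1 t2 X, xM k t1 t2 X)) (Fpm (xP l1 l2 t1 t2 X, xM k t1 t2 X)) (Fmm (xP l1 l2 t1 t2 X, xM k t1 t2 X)) 1 2 X)
     (hca l1 l2 k t1 t2 (Fm (xP l1 l2 t1 t2 X, xM k t1 t2 X)) (Fpp (xP l1 l2 t1 t2 X, xM k t1 t2 X)) (Fpm (xP l1 l2 t1 t2 X, xM k t1 t2 X)) (Fmm (xP l1 l2 t1 t2 X, xM k t1 t2 X)) 2 2 X) X"
  unfolding Hy2_def[abs_def]
  by (rule Dx_cong[OF Dx_add[OF Dx_mult[OF Dx_comp2[OF hFp Dx_D4[OF dP] Dx_D4[OF dM[OF assms]]] Dx_D4[OF D4_const]]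
        Dx_mult[OF Dx_comp2[OF hFm Dx_D4[OF dP] Dx_D4[OF dM[OF assms]]] dMy2[OF assms]]]])
     (simp_all add: hca_def Let_def algebra_simps)

lemma lap_generic:
  fixes N :: real and f :: "complex \<times> complex \<Rightarrow> complex"
  assumes pde: "\<And>z. Fpp z - fst z * Fpm z - 2 * Fm z - snd z * Fmm z = 0"
    and f: "\<And>w. f w = F (xP l1 l2 t1 t2 (w, cj w), xM k t1 t2 (w, cj w))"
    and k: "k = of_real N * l1 * l2" and u: "u \<noteq> 0"
  shows "burns_laplacian N f u = 0"
proof -
  have dzb: "dzb 1 f w = Hy1 Fp Fm l1 l2 k t1 t2 (w, cj w) \<and> dzb 2 f w = Hy2 Fp Fm l1 l2 k t1 t2 (w, cj w)"
    if w0: "w \<noteq> 0" for w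
  proof -
    obtain a b where "D4 (\<lambda>X. F (xP l1 l2 t1 t2 X, xM k t1 t2 X)) a b (Hy1 Fp Fm l1 l2 k t1 t2 (w, cj w)) (Hy2 Fp Fm l1 l2 k t1 t2 (w, cj w)) (w, cj w)"
      using dH[OF xR_nz[OF w0]] by blast
    from wirt[OF this] show ?thesis using f by simp
  qed
  have evu: "\<forall>\<^sub>F w in nhds u. w \<noteq> 0"
  proof -
    have "open (- {0::complex \<times> complex})" by (simp add: open_Compl)
    from eventually_nhds_in_open[OF this] show ?thesis using u by simp
  qed
  define X0 where "X0 = (u, cj u)"
  have r0: "xR X0 \<noteq> 0" using xR_nz[OF u] X0_def by simp
  define z0 where "z0 = (xP l1 l2 t1 t2 X0, xM k t1 t2 X0)"
  let ?h = "\<lambda>c q. hca l1 l2 k t1 t2 (Fm z0) (Fpp z0) (Fpm z0) (Fmm z0) c q X0"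
  have e1: "\<forall>\<^sub>F w in nhds u. dzb 1 f w = Hy1 Fp Fm l1 l2 k t1 t2 (w, cj w)"
    using evu by eventually_elim (use dzb in blast)
  have e2: "\<forall>\<^sub>F w in nhds u. dzb 2 f w = Hy2 Fp Fm l1 l2 k t1 t2 (w, cj w)"
    using evu by eventually_elim (use dzb in blast)
  define K2 where "K2 = (\<lambda>X. fst (snd X) * Hy1 Fp Fm l1 l2 k t1 t2 X + snd (snd X) * Hy2 Fp Fm l1 l2 k t1 t2 X)"
  have e3: "\<forall>\<^sub>F w in nhds u. (\<Sum>b\<in>{1,2}. cnj (cu b w) * dzb b f w) = K2 (w, cj w)"
    using evu by eventually_elim (use dzb in \<open>simp add: K2_def cu_def cj_def\<close>)
  have d1: "Dx (Hy1 Fp Fm l1 l2 k t1 t2) (?h 1 1) (?h 2 1) X0" using dHy1[OF r0] unfolding z0_def .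
  have d2: "Dx (Hy2 Fp Fm l1 l2 k t1 t2) (?h 1 2) (?h 2 2) X0" using dHy2[OF r0] unfolding z0_def .
  have dK: "Dx K2 (fst (snd X0) * ?h 1 1 + snd (snd X0) * ?h 1 2) (fst (snd X0) * ?h 2 1 + snd (snd X0) * ?h 2 2) X0"
    unfolding K2_def
    by (rule Dx_cong[OF Dx_add[OF Dx_mult[OF Dx_D4[OF D4_y1] d1] Dx_mult[OF Dx_D4[OF D4_y2] d2]]]) simp_all
  have w1: "dz 1 (dzb 1 f) u = ?h 1 1" "dz 2 (dzb 2 f) u = ?h 2 2"
    using wirt_Dx[OF d1[unfolded X0_def] e1] wirt_Dx[OF d2[unfolded X0_def] e2] unfolding X0_def by auto
  have w2: "dz 1 (\<lambda>w. \<Sum>b\<in>{1,2}. cnj (cu b w) * dzb b f w) u = fst (snd X0) * ?h 1 1 + snd (snd X0) * ?h 1 2"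
       "dz 2 (\<lambda>w. \<Sum>b\<in>{1,2}. cnj (cu b w) * dzb b f w) u = fst (snd X0) * ?h 2 1 + snd (snd X0) * ?h 2 2"
    using wirt_Dx[OF dK[unfolded X0_def] e3] unfolding X0_def by auto
  have X0: "X0 = ((fst u, snd u), (cnj (fst u), cnj (snd u)))" unfolding X0_def cj_def by simp
  have NR: "complex_of_real (N / (normsq u)^2) = of_real N / (xR X0)^2"
    unfolding X0_def xR_cj by simp
  have "(\<Sum>a\<in>{1,2}. dz a (dzb a f) u)
      + of_real (N / (normsq u)^2) * (\<Sum>a\<in>{1,2}. cu a u * dz a (\<lambda>w. \<Sum>b\<in>{1,2}. cnj (cu b w) * dzb b f w) u)
      = ?h 1 1 + ?h 2 2 + of_real N / (xR X0)^2 * (fst u * (cnj (fst u) * ?h 1 1 + cnj (snd u) * ?h 1 2)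
                     + snd u * (cnj (fst u) * ?h 2 1 + cnj (snd u) * ?h 2 2))"
  proof -
    have sum12: "(\<Sum>a\<in>{1,2::nat}. g a) = g 1 + g 2" for g :: "nat \<Rightarrow> complex" by simp
    show ?thesis unfolding NR sum12 w1 w2[unfolded sum12] by (simp add: cu_def X0_def cj_def)
  qed
  also have "\<dots> = xM k t1 t2 X0 / xR X0 * (Fpp z0 - xP l1 l2 t1 t2 X0 * Fpm z0 - 2 * Fm z0 - xM k t1 t2 X0 * Fmm z0)"
    by (rule lap_alg[OF X0 r0 k])
  also have "\<dots> = 0" using pde[of z0] unfolding z0_def by simp
  finally show ?thesis unfolding burns_laplacian_def by simp
qed

end

lemma hd_field:
  assumes "(g has_field_derivative g') (at (f x))" "(f has_derivative f') (at x within s)"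
  shows "((\<lambda>x. g (f x)) has_derivative (\<lambda>h. f' h * g')) (at x within s)"
proof -
  have "(g has_derivative (\<lambda>h. g' * h)) (at (f x))" using assms(1) by (simp add: has_field_derivative_def)
  from has_derivative_compose[OF assms(2) this] show ?thesis by (simp add: mult.commute)
qed

lemmas hd_exp = hd_field[OF DERIV_exp]
lemmas hd_C = hd_field[OF Cser_deriv]
lemmas hd_S = hd_field[OF Sser_deriv]
lemmas hd_T = hd_field[OF Tser_deriv]

definition Qz :: "complex \<times> complex \<Rightarrow> complex" where "Qz z = (fst z)^2 / 4 + snd z"
definition EE :: "complex \<times> complex \<Rightarrow> complex" where "EE z = exp (\<i> * fst z / 2)"
definition FF :: "complex \<times> complex \<Rightarrow> complex" where "FF z = EE z * (Cser (Qz z) + \<i> * fst z / 2 * Sser (Qz z))"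
definition FFm :: "complex \<times> complex \<Rightarrow> complex" where "FFm z = EE z * (- Sser (Qz z) / 2 + \<i> * fst z / 2 * Tser (Qz z))"
definition FFp :: "complex \<times> complex \<Rightarrow> complex" where "FFp z = EE z * (\<i>/2 * Cser (Qz z) + (\<i>/2 - fst z / 2) * Sser (Qz z) + \<i> * (fst z)^2 / 4 * Tser (Qz z))"
definition FFmm :: "complex \<times> complex \<Rightarrow> complex" where "FFmm z = EE z * (- Tser (Qz z) / 2 + \<i> * fst z / 2 * User (Qz z))"
definition FFpm :: "complex \<times> complex \<Rightarrow> complex" where "FFpm z = EE z * (- \<i>/4 * Sser (Qz z) + (\<i>/2 - fst z / 2) * Tser (Qz z) + \<i> * (fst z)^2 / 4 * User (Qz z))"
definition FFpp :: "complex \<times> complex \<Rightarrow> complex" where "FFpp z = EE z * (- Cser (Qz z) / 4 + (-3/4 - 3 * \<i> * fst z / 8) * Sser (Qz z)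
     + (-3 * (fst z)^2 / 8 + 3 * \<i> * fst z / 4) * Tser (Qz z) + \<i> * (fst z)^3 / 8 * User (Qz z))"

lemma hQz: "(Qz has_derivative (\<lambda>h. fst z / 2 * fst h + snd h)) (at z)"
proof -
  have f: "((\<lambda>x. fst x) has_derivative (\<lambda>x. fst x)) (at z)" by (rule has_derivative_fst[OF has_derivative_ident])
  have s: "((\<lambda>x. snd x) has_derivative (\<lambda>x. snd x)) (at z)" by (rule has_derivative_snd[OF has_derivative_ident])
  have D: "((\<lambda>z. inverse 4 * (fst z * fst z) + snd z) has_derivative
      (\<lambda>h. inverse 4 * (fst z * fst h + fst h * fst z) + snd h)) (at z)"
    by (rule has_derivative_add[OF has_derivative_mult_right[OF has_derivative_mult[OF f f]] s])
  have e: "Qz = (\<lambda>z. inverse 4 * (fst z * fst z) + snd z)"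
    by (auto simp: Qz_def fun_eq_iff power2_eq_square field_simps)
  show ?thesis unfolding e
    by (rule has_derivative_eq_rhs[OF D]) (auto simp: fun_eq_iff field_simps)
qed

lemma hEE: "(EE has_derivative (\<lambda>h. \<i> / 2 * EE z * fst h)) (at z)"
  unfolding EE_def[abs_def]
  by (rule has_derivative_eq_rhs, rule hd_exp, (rule derivative_intros)+) (auto simp: fun_eq_iff field_simps)

lemma ii: "\<i> * (\<i> * x) = - x" by (simp add: mult.assoc[symmetric])

lemma hFF: "(FF has_derivative (\<lambda>h. FFp z * fst h + FFm z * snd h)) (at z)"
  unfolding FF_def[abs_def]
  apply (rule has_derivative_eq_rhs)
   apply (rule derivative_intros hEE hd_C[OF hQz] hd_S[OF hQz] numeral_neq_zero)+
  apply (simp add: fun_eq_iff FFp_def FFm_def)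
  by (simp add: field_simps power2_eq_square power3_eq_cube)

lemma hFFp: "(FFp has_derivative (\<lambda>h. FFpp z * fst h + FFpm z * snd h)) (at z)"
  unfolding FFp_def[abs_def]
  apply (rule has_derivative_eq_rhs)
   apply (rule derivative_intros hEE hd_C[OF hQz] hd_S[OF hQz] hd_T[OF hQz] numeral_neq_zero)+
  apply (simp add: fun_eq_iff FFpp_def FFpm_def)
  by (simp add: field_simps power2_eq_square power3_eq_cube)

lemma hFFm: "(FFm has_derivative (\<lambda>h. FFpm z * fst h + FFmm z * snd h)) (at z)"
  unfolding FFm_def[abs_def]
  apply (rule has_derivative_eq_rhs)
   apply (rule derivative_intros hEE hd_S[OF hQz] hd_T[OF hQz] numeral_neq_zero)+
  apply (simp add: fun_eq_iff FFmm_def FFpm_def)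
  by (simp add: field_simps power2_eq_square power3_eq_cube)

lemma FF_pde: "FFpp z - fst z * FFpm z - 2 * FFm z - snd z * FFmm z = 0"
proof -
  define C where "C = Cser (Qz z)"
  define S where "S = Sser (Qz z)"
  define T where "T = Tser (Qz z)"
  define U where "U = User (Qz z)"
  define Q where "Q = Qz z"
  have r1: "2 * Q * T = C - S" unfolding C_def S_def T_def Q_def by (rule rel1)
  have r2: "2 * Q * U = - S / 2 - 3 * T" unfolding U_def S_def T_def Q_def by (rule rel2)
  have q: "Q = (fst z)^2 / 4 + snd z" by (simp add: Q_def Qz_def)
  have "FFpp z - fst z * FFpm z - 2 * FFm z - snd z * FFmm z
     = EE z * (-(\<i> * fst z / 4) * (2 * Q * U + S / 2 + 3 * T) + 1/4 * (2 * Q * T - C + S))"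
    unfolding FFpp_def FFpm_def FFm_def FFmm_def C_def[symmetric] S_def[symmetric] T_def[symmetric] U_def[symmetric] q
    by (simp add: field_simps power2_eq_square power3_eq_cube)
  also have "\<dots> = 0" unfolding r1 r2 by simp
  finally show ?thesis .
qed

lemma phi_FF: "phi N l lt w = FF (xP (fst l) (snd l) (fst lt) (snd lt) (w, cj w), xM (of_real N * fst l * snd l) (fst lt) (snd lt) (w, cj w))"
proof -
  have P: "xP (fst l) (snd l) (fst lt) (snd lt) (w, cj w) = pdx l lt w"
    by (simp add: xP_def xA_def xB_def cj_def pdx_def brh_def br_def uhat_def algebra_simps)
  have M: "xM (of_real N * fst l * snd l) (fst lt) (snd lt) (w, cj w) = of_real N * fst l * snd l * br w lt * brh w lt / of_real (normsq w)"
    unfolding xM_def xR_cj[symmetric]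
    by (simp add: xA_def xB_def cj_def brh_def br_def uhat_def divide_inverse algebra_simps)
  show ?thesis unfolding P M phi_def FF_def EE_def Qz_def Qf_def by (simp add: algebra_simps)
qed

lemma part_i: "u \<noteq> 0 \<Longrightarrow> burns_laplacian N (phi N l lt) u = 0"
  by (rule lap_generic[OF hFF hFFp hFFm FF_pde phi_FF refl])

definition G :: "nat \<Rightarrow> complex \<Rightarrow> complex \<Rightarrow> complex" where
  "G k z c = (\<Sum>j\<le>k. of_nat ((k - j) choose j) * c^j * z^(k - 2*j))"

definition H :: "nat \<Rightarrow> complex \<Rightarrow> complex \<Rightarrow> complex" where
  "H k m1 m2 = (\<Sum>a\<le>k. m1^a * m2^(k - a))"

lemma G0: "G 0 z c = 1" by (simp add: G_def)
lemma G1: "G 1 z c = z" by (simp add: G_def)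

lemma G_rec: "G (Suc (Suc k)) z c = z * G (Suc k) z c + c * G k z c"
proof -
  have L: "G (Suc (Suc k)) z c = z^(k+2) + (\<Sum>i\<le>k. of_nat ((k + 1 - i) choose (i+1)) * c^(i+1) * z^(k - 2*i))
       + of_nat (0 choose (k+2)) * c^(k+2) * z^0"
    unfolding G_def
    apply (subst sum.atMost_Suc_shift)
    apply (subst sum.atMost_Suc)
    by (simp add: Suc_diff_le algebra_simps)
  have zG: "z * G (Suc k) z c = z^(k+2) + (\<Sum>i\<le>k. of_nat ((k - i) choose (i+1)) * c^(i+1) * z^(k - 2*i))"
  proof -
    have "z * G (Suc k) z c = z * z^(k+1) + (\<Sum>i\<le>k. z * (of_nat ((k - i) choose (i+1)) * c^(i+1) * z^(k - 1 - 2*i)))"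
      unfolding G_def by (subst sum.atMost_Suc_shift) (simp add: sum_distrib_left distrib_left)
    also have "(\<Sum>i\<le>k. z * (of_nat ((k - i) choose (i+1)) * c^(i+1) * z^(k - 1 - 2*i)))
        = (\<Sum>i\<le>k. of_nat ((k - i) choose (i+1)) * c^(i+1) * z^(k - 2*i))"
    proof (rule sum.cong[OF refl])
      fix i assume "i \<in> {..k}"
      show "z * (of_nat ((k - i) choose (i+1)) * c^(i+1) * z^(k - 1 - 2*i)) = of_nat ((k - i) choose (i+1)) * c^(i+1) * z^(k - 2*i)"
      proof (cases "2*i + 1 \<le> k")
        case True
        hence "k - 2*i = Suc (k - 1 - 2*i)" by simp
        thus ?thesis by (simp add: algebra_simps)
      next
        case False
        hence "k - i < i + 1" by simp
        hence "(k - i) choose (i+1) = 0" by simp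
        thus ?thesis by simp
      qed
    qed
    finally show ?thesis by (simp add: algebra_simps)
  qed
  have cG: "c * G k z c = (\<Sum>i\<le>k. of_nat ((k - i) choose i) * c^(i+1) * z^(k - 2*i))"
    unfolding G_def by (simp add: sum_distrib_left algebra_simps)
  have P: "of_nat ((Suc k - i) choose (Suc i)) = (of_nat ((k - i) choose (Suc i)) + of_nat ((k - i) choose i) :: complex)"
    if "i \<le> k" for i
  proof -
    have "k + 1 - i = Suc (k - i)" using that by simp
    thus ?thesis by simp
  qed
  have S: "(\<Sum>i\<le>k. of_nat ((k + 1 - i) choose (i+1)) * c^(i+1) * z^(k - 2*i))
     = (\<Sum>i\<le>k. of_nat ((k - i) choose (i+1)) * c^(i+1) * z^(k - 2*i)) + (\<Sum>i\<le>k. of_nat ((k - i) choose i) * c^(i+1) * z^(k - 2*i))"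
    unfolding sum.distrib[symmetric]
  proof (rule sum.cong[OF refl])
    fix i assume "i \<in> {..k}"
    hence e: "k + 1 - i = Suc (k - i)" by simp
    have "of_nat ((k + 1 - i) choose (i+1)) = (of_nat ((k - i) choose (i+1)) + of_nat ((k - i) choose i) :: complex)"
    proof -
      have "((k + 1 - i) choose (i+1)) = ((k - i) choose (i+1)) + ((k - i) choose i)"
        using binomial_Suc_Suc[of "k - i" i] e by simp
      thus ?thesis by simp
    qed
    thus "of_nat ((k + 1 - i) choose (i+1)) * c^(i+1) * z^(k - 2*i) = of_nat ((k - i) choose (i+1)) * c^(i+1) * z^(k - 2*i) + of_nat ((k - i) choose i) * c^(i+1) * z^(k - 2*i)"
      by (simp add: distrib_right)
  qed
  show ?thesis unfolding L zG cG S by simp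
qed

lemma H_Suc1: "H (Suc k) m1 m2 = m1^(Suc k) + m2 * H k m1 m2"
  unfolding H_def by (simp add: sum_distrib_left Suc_diff_le algebra_simps)

lemma H_Suc2: "H (Suc k) m1 m2 = m2^(Suc k) + m1 * H k m1 m2"
proof -
  have "H (Suc k) m1 m2 = (\<Sum>a\<le>Suc k. m2^a * m1^(Suc k - a))"
    unfolding H_def by (rule sum.reindex_bij_witness[of _ "\<lambda>a. Suc k - a" "\<lambda>a. Suc k - a"]) auto
  also have "\<dots> = m2^(Suc k) + m1 * H k m2 m1"
    unfolding H_def by (simp add: sum_distrib_left Suc_diff_le algebra_simps)
  also have "H k m2 m1 = H k m1 m2"
    unfolding H_def by (rule sum.reindex_bij_witness[of _ "\<lambda>a. k - a" "\<lambda>a. k - a"]) auto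
  finally show ?thesis .
qed

lemma G_H: "G k (m1 + m2) (- (m1 * m2)) = H k m1 m2"
proof (induction k rule: nat_less_induct)
  case (1 n)
  show ?case
  proof (cases n)
    case 0 thus ?thesis by (simp add: G0 H_def)
  next
    case (Suc k) note n = this
    show ?thesis
    proof (cases k)
      case 0 thus ?thesis using n by (simp add: G_def H_def)
    next
      case (Suc j)
      have IH1: "G (Suc j) (m1 + m2) (- (m1 * m2)) = H (Suc j) m1 m2" using 1 n Suc by simp
      have IH2: "G j (m1 + m2) (- (m1 * m2)) = H j m1 m2" using 1 n Suc by simp
      have "H (Suc (Suc j)) m1 m2 = m1^(Suc (Suc j)) + m2 * H (Suc j) m1 m2" by (rule H_Suc1)
      moreover have "H (Suc j) m1 m2 = m1^(Suc j) + m2 * H j m1 m2" by (rule H_Suc1)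
      moreover have "H (Suc j) m1 m2 = m2^(Suc j) + m1 * H j m1 m2" by (rule H_Suc2)
      ultimately have "H (Suc (Suc j)) m1 m2 = (m1 + m2) * H (Suc j) m1 m2 - m1 * m2 * H j m1 m2"
        by (simp add: algebra_simps)
      thus ?thesis using n Suc G_rec IH1 IH2 by (simp add: algebra_simps)
    qed
  qed
qed

lemma H_diff: "(m1 - m2) * H k m1 m2 = m1^(Suc k) - m2^(Suc k)"
  using H_Suc1[of k m1 m2] H_Suc2[of k m1 m2] by (simp add: algebra_simps)

lemma H_eq: "H k m m = of_nat (Suc k) * m^k"
  unfolding H_def by (simp add: power_add[symmetric])

lemma exp_series: "(\<lambda>k. x^k / fact k) sums exp (x::complex)"
  using exp_converges[of x] by (simp add: divide_inverse scaleR_conv_of_real mult.commute)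

lemma H_series: "(\<lambda>k. H k m1 m2 / fact k) sums
   (if m1 = m2 then exp m1 * (1 + m1) else (m1 * exp m1 - m2 * exp m2) / (m1 - m2))"
proof (cases "m1 = m2")
  case True
  have a: "(\<lambda>k. m1^k / fact k) sums exp m1" by (rule exp_series)
  have "(\<lambda>k. m1 * (m1^k / fact k)) sums (m1 * exp m1)" by (rule sums_mult[OF a])
  moreover have "(\<lambda>k. m1 * (m1^k / fact k)) = (\<lambda>k. of_nat (Suc k) * m1^(Suc k) / fact (Suc k))"
  proof
    fix k
    have f: "(fact (Suc k) :: complex) = of_nat (Suc k) * fact k" by (simp add: fact_Suc)
    have nz: "(of_nat (Suc k) :: complex) \<noteq> 0" by (subst of_nat_eq_0_iff) simp
    have "of_nat (Suc k) * m1^(Suc k) / fact (Suc k) = of_nat (Suc k) * (m1^(Suc k)) / (of_nat (Suc k) * fact k)"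
      unfolding f ..
    also have "\<dots> = m1^(Suc k) / fact k" by (rule mult_divide_mult_cancel_left[OF nz])
    finally show "m1 * (m1^k / fact k) = of_nat (Suc k) * m1^(Suc k) / fact (Suc k)"
      by simp
  qed
  ultimately have "(\<lambda>k. of_nat (Suc k) * m1^(Suc k) / fact (Suc k)) sums (m1 * exp m1)" by simp
  hence b: "(\<lambda>k. of_nat k * m1^k / fact k) sums (m1 * exp m1)"
    using sums_Suc_iff[of "\<lambda>k. of_nat k * m1^k / fact k"] by simp
  have "(\<lambda>k. m1^k / fact k + of_nat k * m1^k / fact k) sums (exp m1 + m1 * exp m1)"
    by (rule sums_add[OF a b])
  thus ?thesis using True by (simp add: H_eq algebra_simps add_divide_distrib)
next
  case False
  have a: "(\<lambda>k. m1 * (m1^k / fact k)) sums (m1 * exp m1)" by (rule sums_mult[OF exp_series])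
  have b: "(\<lambda>k. m2 * (m2^k / fact k)) sums (m2 * exp m2)" by (rule sums_mult[OF exp_series])
  have "(\<lambda>k. (m1 * (m1^k / fact k) - m2 * (m2^k / fact k)) / (m1 - m2)) sums ((m1 * exp m1 - m2 * exp m2) / (m1 - m2))"
    by (rule sums_divide[OF sums_diff[OF a b]])
  moreover have "(\<lambda>k. (m1 * (m1^k / fact k) - m2 * (m2^k / fact k)) / (m1 - m2)) = (\<lambda>k. H k m1 m2 / fact k)"
  proof
    fix k
    have "H k m1 m2 = (m1^(Suc k) - m2^(Suc k)) / (m1 - m2)"
      using H_diff[of m1 m2 k] False by (simp add: field_simps)
    thus "(m1 * (m1^k / fact k) - m2 * (m2^k / fact k)) / (m1 - m2) = H k m1 m2 / fact k"
      by (simp add: field_simps)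
  qed
  ultimately show ?thesis using False by simp
qed

lemma Sser0: "Sser 0 = 1"
  unfolding Sser_eq using powser_zero[of cS] by (simp add: cS_def)
lemma Cser0: "Cser 0 = 1"
  using Cser_sq[of 0] by simp

lemma FF_series: "(\<lambda>k. G k (\<i> * P) (- M) / fact k) sums FF (P, M)"
proof -
  define Q where "Q = Qz (P, M)"
  define s where "s = csqrt Q"
  have s2: "s^2 = Q" unfolding s_def by simp
  define m1 where "m1 = \<i> * P / 2 + \<i> * s"
  define m2 where "m2 = \<i> * P / 2 - \<i> * s"
  have sum: "m1 + m2 = \<i> * P" unfolding m1_def m2_def by simp
  have prod: "m1 * m2 = M"
  proof -
    have "m1 * m2 = - (P^2) / 4 + s^2" unfolding m1_def m2_def by (simp add: algebra_simps power2_eq_square)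
    also have "\<dots> = M" unfolding s2 Q_def Qz_def by simp
    finally show ?thesis .
  qed
  have GH: "G k (\<i> * P) (- M) = H k m1 m2" for k
    using G_H[of k m1 m2] unfolding sum prod .
  have CS: "Cser Q = cos s" "s * Sser Q = sin s" using Cser_sq[of s] Sser_sq[of s] unfolding s2 by simp_all
  have FFQ: "FF (P, M) = exp (\<i> * P / 2) * (Cser Q + \<i> * P / 2 * Sser Q)"
    unfolding FF_def EE_def Q_def by simp
  show ?thesis
  proof (cases "s = 0")
    case True
    hence Q0: "Q = 0" using s2 by simp
    have "m1 = m2" "m1 = \<i> * P / 2" using True unfolding m1_def m2_def by simp_all
    with H_series[of m1 m2] have "(\<lambda>k. H k m1 m2 / fact k) sums (exp (\<i> * P / 2) * (1 + \<i> * P / 2))" by simp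
    thus ?thesis unfolding GH FFQ Q0 Sser0 Cser0 by simp
  next
    case False
    have ne: "m1 \<noteq> m2" using False unfolding m1_def m2_def by simp
    with H_series[of m1 m2] have *: "(\<lambda>k. H k m1 m2 / fact k) sums ((m1 * exp m1 - m2 * exp m2) / (m1 - m2))" by simp
    have e1: "exp m1 = exp (\<i> * P / 2) * (cos s + \<i> * sin s)"
      unfolding m1_def exp_add exp_Euler ..
    have e2: "exp m2 = exp (\<i> * P / 2) * (cos s - \<i> * sin s)"
      unfolding m2_def diff_conv_add_uminus exp_add exp_minus_Euler ..
    have Sq: "Sser Q = sin s / s" using CS(2) False by (simp add: field_simps)
    have "(m1 * exp m1 - m2 * exp m2) / (m1 - m2) = FF (P, M)"
      unfolding FFQ e1 e2 Sq CS(1) using False unfolding m1_def m2_def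
      by (simp add: field_simps)
    thus ?thesis using * unfolding GH by simp
  qed
qed

lemma has_sum_group:
  fixes f :: "'a \<Rightarrow> complex" and h :: "'a \<Rightarrow> 'b"
  assumes "(f has_sum S) UNIV" and "\<And>b. finite {a. h a = b}"
  shows "((\<lambda>b. sum f {a. h a = b}) has_sum S) UNIV"
proof -
  have bij: "bij_betw (\<lambda>a. (h a, a)) UNIV (Sigma UNIV (\<lambda>b. {a. h a = b}))"
    by (rule bij_betwI[where g=snd]) auto
  have "((\<lambda>(b,a). f a) has_sum S) (Sigma UNIV (\<lambda>b. {a. h a = b}))"
    using has_sum_reindex_bij_betw[OF bij, of "\<lambda>(b,a). f a" S] assms(1) by simp
  then show ?thesis by (rule has_sum_SigmaD) (auto intro: has_sum_finiteI assms(2))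
qed

lemma exp_partial_le: "a \<ge> 0 \<Longrightarrow> (\<Sum>j\<le>n. a^j / fact j) \<le> exp (a::real)"
proof -
  assume a: "a \<ge> 0"
  have s: "(\<lambda>j. a^j / fact j) sums exp a"
    using exp_converges[of a] by (simp add: divide_inverse mult.commute)
  have "(\<Sum>j\<le>n. a^j / fact j) \<le> suminf (\<lambda>j. a^j / fact j)"
    using a by (intro sum_le_suminf sums_summable[OF s]) auto
  thus ?thesis using s by (simp add: sums_iff)
qed

definition f3 :: "complex \<Rightarrow> complex \<Rightarrow> complex \<Rightarrow> nat \<times> nat \<times> nat \<Rightarrow> complex" where
  "f3 c A B = (\<lambda>(j, p, q). c^j * A^p * B^q * fact (j+p+q) / (fact j * fact p * fact q * fact (2*j+p+q)))"

definition g3 :: "real \<Rightarrow> real \<Rightarrow> real \<Rightarrow> nat \<times> nat \<times> nat \<Rightarrow> real" where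
  "g3 a b d = (\<lambda>(j, p, q). a^j / fact j * (b^p / fact p) * (d^q / fact q))"

lemma f3_le: "norm (f3 c A B x) \<le> g3 (norm c) (norm A) (norm B) x"
proof -
  obtain j p q where x: "x = (j, p, q)" by (cases x) auto
  have le: "(fact (j+p+q) :: real) \<le> fact (2*j+p+q)" by (intro fact_mono) simp
  have "norm (f3 c A B x) = norm c ^ j * norm A ^ p * norm B ^ q * fact (j+p+q) / (fact j * fact p * fact q * fact (2*j+p+q))"
    unfolding x f3_def by (simp add: norm_mult norm_divide norm_power norm_fact)
  also have "\<dots> \<le> norm c ^ j * norm A ^ p * norm B ^ q * fact (2*j+p+q) / (fact j * fact p * fact q * fact (2*j+p+q))"
    by (intro divide_right_mono mult_left_mono le) auto
  also have "\<dots> = g3 (norm c) (norm A) (norm B) x"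
    unfolding x g3_def by simp
  finally show ?thesis .
qed

lemma f3_summable: "f3 c A B summable_on UNIV"
proof -
  let ?a = "norm c" and ?b = "norm A" and ?d = "norm B"
  have "bdd_above (sum (\<lambda>x. norm (f3 c A B x)) ` {F. F \<subseteq> UNIV \<and> finite F})"
  proof (rule bdd_aboveI2)
    fix F :: "(nat \<times> nat \<times> nat) set" assume "F \<in> {F. F \<subseteq> UNIV \<and> finite F}"
    hence fin: "finite F" by simp
    define n where "n = (\<Sum>x\<in>F. fst x + fst (snd x) + snd (snd x))"
    have sub: "F \<subseteq> {..n} \<times> ({..n} \<times> {..n})"
    proof
      fix x assume "x \<in> F"
      hence "fst x + fst (snd x) + snd (snd x) \<le> n" unfolding n_def using fin
        by (intro member_le_sum) auto
      thus "x \<in> {..n} \<times> ({..n} \<times> {..n})" by (cases x) auto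
    qed
    have "(\<Sum>x\<in>F. norm (f3 c A B x)) \<le> (\<Sum>x\<in>F. g3 ?a ?b ?d x)"
      by (intro sum_mono f3_le)
    also have "\<dots> \<le> (\<Sum>x\<in>{..n} \<times> ({..n} \<times> {..n}). g3 ?a ?b ?d x)"
      by (intro sum_mono2 sub) (auto simp: g3_def)
    also have "\<dots> = (\<Sum>j\<le>n. ?a^j / fact j) * ((\<Sum>p\<le>n. ?b^p / fact p) * (\<Sum>q\<le>n. ?d^q / fact q))"
      by (simp add: g3_def sum_product sum.cartesian_product case_prod_beta mult.assoc)
    also have "\<dots> \<le> exp ?a * (exp ?b * exp ?d)"
      by (intro mult_mono exp_partial_le sum_nonneg mult_nonneg_nonneg) auto
    finally show "(\<Sum>x\<in>F. norm (f3 c A B x)) \<le> exp ?a * (exp ?b * exp ?d)" .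
  qed
  hence "(\<lambda>x. norm (f3 c A B x)) summable_on UNIV" using abs_summable_iff_bdd_above by blast
  thus ?thesis by (simp add: summable_on_iff_abs_summable_on_complex)
qed

lemma poch_fact: "pochhammer (of_nat (Suc j) :: complex) n = fact (j + n) / fact j"
proof -
  have "(fact (j + n) :: complex) = pochhammer 1 (j + n)" by (simp add: pochhammer_fact)
  also have "\<dots> = pochhammer 1 j * pochhammer (1 + of_nat j) n" by (rule pochhammer_product')
  also have "\<dots> = fact j * pochhammer (of_nat (Suc j)) n" by (simp add: pochhammer_fact add.commute)
  finally show ?thesis by (simp add: field_simps)
qed

definition d2 :: "complex \<Rightarrow> complex \<Rightarrow> nat \<times> nat \<Rightarrow> complex" where
  "d2 c z = (\<lambda>(j, n). c^j * z^n * fact (j+n) / (fact j * fact n * fact (2*j+n)))"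

lemma fiber1_set: "{a :: nat \<times> nat \<times> nat. (fst a, fst (snd a) + snd (snd a)) = (j, n)} = (\<lambda>p. (j, p, n - p)) ` {..n}"
  by (auto simp: image_iff)

lemma fiber1: "sum (f3 c A B) {a. (fst a, fst (snd a) + snd (snd a)) = (j, n)} = d2 c (A + B) (j, n)"
proof -
  have inj: "inj_on (\<lambda>p. (j, p, n - p)) {..n}" by (auto simp: inj_on_def)
  have "sum (f3 c A B) {a. (fst a, fst (snd a) + snd (snd a)) = (j, n)}
      = (\<Sum>p\<le>n. c^j * fact (j+n) / (fact j * fact (2*j+n)) * (fact n / (fact p * fact (n-p))) * A^p * B^(n-p) / fact n)"
    unfolding fiber1_set sum.reindex[OF inj]
  proof (rule sum.cong[OF refl])
    fix p assume "p \<in> {..n}"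
    hence p: "p \<le> n" by simp
    hence e1: "j + p + (n - p) = j + n" "2*j + p + (n - p) = 2*j + n" by simp_all
    show "(f3 c A B \<circ> (\<lambda>p. (j, p, n - p))) p = c^j * fact (j+n) / (fact j * fact (2*j+n)) * (fact n / (fact p * fact (n-p))) * A^p * B^(n-p) / fact n"
      unfolding f3_def o_def using e1 by (simp add: field_simps)
  qed
  also have "\<dots> = c^j * fact (j+n) / (fact j * fact (2*j+n)) / fact n * (\<Sum>p\<le>n. of_nat (n choose p) * A^p * B^(n-p))"
    unfolding sum_distrib_left
  proof (rule sum.cong[OF refl])
    fix p assume "p \<in> {..n}"
    hence p: "p \<le> n" by simp
    show "c^j * fact (j+n) / (fact j * fact (2*j+n)) * (fact n / (fact p * fact (n-p))) * A^p * B^(n-p) / fact n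
        = c^j * fact (j+n) / (fact j * fact (2*j+n)) / fact n * (of_nat (n choose p) * A^p * B^(n-p))"
      unfolding binomial_fact[OF p] by (simp add: field_simps)
  qed
  also have "\<dots> = d2 c (A + B) (j, n)"
    unfolding binomial_ring[symmetric] d2_def by (simp add: field_simps)
  finally show ?thesis .
qed

lemma fiber2_set: "{a :: nat \<times> nat. 2 * fst a + snd a = k} = (\<lambda>j. (j, k - 2*j)) ` {..k div 2}"
  by (auto simp: image_iff)

lemma fiber2: "sum (d2 c z) {a. 2 * fst a + snd a = k} = G k z c / fact k"
proof -
  have inj: "inj_on (\<lambda>j. (j, k - 2*j)) {..k div 2}" by (auto simp: inj_on_def)
  have "sum (d2 c z) {a. 2 * fst a + snd a = k} = (\<Sum>j\<le>k div 2. of_nat ((k - j) choose j) * c^j * z^(k - 2*j) / fact k)"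
    unfolding fiber2_set sum.reindex[OF inj]
  proof (rule sum.cong[OF refl])
    fix j assume "j \<in> {..k div 2}"
    hence j: "2*j \<le> k" by auto
    hence e: "j + (k - 2*j) = k - j" "2*j + (k - 2*j) = k" "k - j - j = k - 2*j" by simp_all
    have jj: "j \<le> k - j" using j by simp
    have b: "of_nat ((k - j) choose j) = (fact (k - j) / (fact j * fact (k - 2*j)) :: complex)"
      using binomial_fact[OF jj] unfolding e(3) .
    show "(d2 c z \<circ> (\<lambda>j. (j, k - 2*j))) j = of_nat ((k - j) choose j) * c^j * z^(k - 2*j) / fact k"
      unfolding d2_def o_def b using e by (simp add: field_simps)
  qed
  also have "\<dots> = G k z c / fact k"
  proof -
    have "(\<Sum>j\<le>k. of_nat ((k - j) choose j) * c^j * z^(k - 2*j)) = (\<Sum>j\<le>k div 2. of_nat ((k - j) choose j) * c^j * z^(k - 2*j))"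
    proof (rule sum.mono_neutral_right)
      show "\<forall>i\<in>{..k} - {..k div 2}. of_nat ((k - i) choose i) * c^i * z^(k - 2*i) = 0"
      proof
        fix i assume "i \<in> {..k} - {..k div 2}"
        hence "k - i < i" by auto
        thus "of_nat ((k - i) choose i) * c^i * z^(k - 2*i) = 0" by simp
      qed
    qed auto
    thus ?thesis unfolding G_def by (simp add: sum_divide_distrib)
  qed
  finally show ?thesis .
qed

lemma fiber3_set: "{a :: nat \<times> nat \<times> nat. (fst a + fst (snd a), fst a + snd (snd a)) = (k, m)} = (\<lambda>j. (j, k - j, m - j)) ` {..min k m}"
  by (auto simp: image_iff)

lemma fiber3: "sum (f3 c A B) {a. (fst a + fst (snd a), fst a + snd (snd a)) = (k, m)} = (\<Sum>j\<le>min k m. f3 c A B (j, k - j, m - j))"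
proof -
  have inj: "inj_on (\<lambda>j. (j, k - j, m - j)) {..min k m}" by (auto simp: inj_on_def)
  show ?thesis unfolding fiber3_set sum.reindex[OF inj] by simp
qed

lemma fin_fibers: "finite {a :: nat \<times> nat \<times> nat. (fst a, fst (snd a) + snd (snd a)) = b}"
  "finite {a :: nat \<times> nat. 2 * fst a + snd a = k}"
  "finite {a :: nat \<times> nat \<times> nat. (fst a + fst (snd a), fst a + snd (snd a)) = b}"
  using fiber1_set[of "fst b" "snd b"] fiber2_set[of k] fiber3_set[of "fst b" "snd b"] by auto

lemma f3_has_sum:
  assumes z: "\<i> * P = A + B" and c: "c = - M"
  shows "(f3 c A B has_sum FF (P, M)) UNIV" "(d2 c (A + B) has_sum FF (P, M)) UNIV"
proof -
  define I where "I = infsum (f3 c A B) UNIV"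
  have hI: "(f3 c A B has_sum I) UNIV" unfolding I_def using f3_summable by (rule has_sum_infsum)
  have g1: "((\<lambda>b. sum (f3 c A B) {a. (fst a, fst (snd a) + snd (snd a)) = b}) has_sum I) UNIV"
    by (rule has_sum_group[OF hI fin_fibers(1)])
  have e1: "(\<lambda>b. sum (f3 c A B) {a. (fst a, fst (snd a) + snd (snd a)) = b}) = d2 c (A + B)"
  proof
    fix b :: "nat \<times> nat" show "sum (f3 c A B) {a. (fst a, fst (snd a) + snd (snd a)) = b} = d2 c (A + B) b"
      using fiber1[of c A B "fst b" "snd b"] by simp
  qed
  have hd: "(d2 c (A + B) has_sum I) UNIV" using g1 unfolding e1 .
  have g2: "((\<lambda>k. sum (d2 c (A + B)) {a. 2 * fst a + snd a = k}) has_sum I) UNIV"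
    by (rule has_sum_group[OF hd fin_fibers(2)])
  hence "(\<lambda>k. G k (A + B) c / fact k) sums I" unfolding fiber2 by (rule has_sum_imp_sums)
  moreover have "(\<lambda>k. G k (A + B) c / fact k) sums FF (P, M)" using FF_series[of P M] unfolding z c[symmetric] .
  ultimately have "I = FF (P, M)" using sums_unique2 by blast
  thus "(f3 c A B has_sum FF (P, M)) UNIV" "(d2 c (A + B) has_sum FF (P, M)) UNIV" using hI hd by simp_all
qed

lemma iia_term:
  assumes "A = \<i> * l1 * a" "B = \<i> * l2 * b" "c = A * B * x"
  shows "(\<i> * l1)^k * (\<i> * l2)^m / (fact k * fact m) *
     (fact k * fact m / fact (k + m) * (\<Sum>j=0..min k m. fact (k + m - j) / (fact j * fact (k - j) * fact (m - j)) * x^j * a^k * b^m))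
   = (\<Sum>j\<le>min k m. f3 c A B (j, k - j, m - j))"
  unfolding sum_distrib_left atLeast0AtMost
proof (rule sum.cong[OF refl])
  fix j assume "j \<in> {..min k m}"
  hence jk: "j \<le> k" and jm: "j \<le> m" by auto
  have e: "j + (k - j) + (m - j) = k + m - j" "2 * j + (k - j) + (m - j) = k + m" using jk jm by simp_all
  have pw: "c^j * A^(k-j) * B^(m-j) = x^j * ((\<i> * l1)^k * a^k) * ((\<i> * l2)^m * b^m)"
  proof -
    have "A^k = A^j * A^(k-j)" "B^m = B^j * B^(m-j)" using jk jm by (simp_all add: power_add[symmetric])
    hence "c^j * A^(k-j) * B^(m-j) = x^j * A^k * B^m" unfolding assms(3) by (simp add: power_mult_distrib algebra_simps)
    thus ?thesis unfolding assms(1,2) by (simp add: power_mult_distrib)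
  qed
  have "f3 c A B (j, k - j, m - j) = (c^j * A^(k-j) * B^(m-j)) * fact (k + m - j) / (fact j * fact (k-j) * fact (m-j) * fact (k + m))"
    unfolding f3_def prod.case e ..
  also have "\<dots> = (\<i> * l1)^k * (\<i> * l2)^m / (fact k * fact m) *
     (fact k * fact m / fact (k + m) * (fact (k + m - j) / (fact j * fact (k - j) * fact (m - j)) * x^j * a^k * b^m))"
    unfolding pw by (simp add: field_simps)
  finally show "(\<i> * l1)^k * (\<i> * l2)^m / (fact k * fact m) *
     (fact k * fact m / fact (k + m) * (fact (k + m - j) / (fact j * fact (k - j) * fact (m - j)) * x^j * a^k * b^m))
     = f3 c A B (j, k - j, m - j)" by simp
qed

lemma phi_FF2: "phi N l lt u = FF (pdx l lt u, of_real N * fst l * snd l * br u lt * brh u lt / of_real (normsq u))"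
  unfolding phi_def FF_def EE_def Qz_def Qf_def by (simp add: algebra_simps)

context
  fixes N :: real and l lt :: "complex \<times> complex" and u :: "complex \<times> complex"
begin

definition "AA = \<i> * fst l * br u lt"
definition "BB = \<i> * snd l * brh u lt"
definition "xx = (of_real (N / normsq u) :: complex)"
definition "cc = AA * BB * xx"
definition "MM = of_real N * fst l * snd l * br u lt * brh u lt / of_real (normsq u)"

lemma AB_pdx: "\<i> * pdx l lt u = AA + BB"
  unfolding AA_def BB_def pdx_def by (simp add: algebra_simps)
lemma cc_MM: "cc = - MM"
  unfolding cc_def AA_def BB_def xx_def MM_def by (simp add: field_simps)

lemma f3_phi: "(f3 cc AA BB has_sum phi N l lt u) UNIV"
  using f3_has_sum(1)[OF AB_pdx cc_MM] unfolding phi_FF2 MM_def .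
lemma d2_phi: "(d2 cc (AA + BB) has_sum phi N l lt u) UNIV"
  using f3_has_sum(2)[OF AB_pdx cc_MM] unfolding phi_FF2 MM_def .

lemma part_iia: "((\<lambda>(k, m). (\<i> * fst l)^k * (\<i> * snd l)^m / (fact k * fact m) * phikl N lt k m u)
          has_sum phi N l lt u) UNIV"
proof -
  have g: "((\<lambda>b. sum (f3 cc AA BB) {a. (fst a + fst (snd a), fst a + snd (snd a)) = b}) has_sum phi N l lt u) UNIV"
    by (rule has_sum_group[OF f3_phi fin_fibers(3)])
  have "(\<lambda>b. sum (f3 cc AA BB) {a. (fst a + fst (snd a), fst a + snd (snd a)) = b})
      = (\<lambda>(k, m). (\<i> * fst l)^k * (\<i> * snd l)^m / (fact k * fact m) * phikl N lt k m u)"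
  proof
    fix b :: "nat \<times> nat"
    obtain k m where b: "b = (k, m)" by (cases b)
    show "sum (f3 cc AA BB) {a. (fst a + fst (snd a), fst a + snd (snd a)) = b}
      = (\<lambda>(k, m). (\<i> * fst l)^k * (\<i> * snd l)^m / (fact k * fact m) * phikl N lt k m u) b"
      unfolding b fiber3 prod.case phikl_def
      by (rule iia_term[symmetric, OF AA_def BB_def cc_def[unfolded xx_def]])
  qed
  thus ?thesis using g by simp
qed

lemma part_iib: "(\<lambda>j. 1 / fact (2 * j)
             * (- (of_real N * fst l * snd l * br u lt * brh u lt / of_real (normsq u)))^j
             * hyp1F1 (of_nat (j + 1)) (of_nat (2 * j + 1)) (\<i> * pdx l lt u))
        sums phi N l lt u"
proof -
  let ?z = "AA + BB"
  let ?T = "\<lambda>j. 1 / fact (2 * j) * cc^j * hyp1F1 (of_nat (j + 1)) (of_nat (2 * j + 1)) ?z"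
  have sumd: "d2 cc ?z summable_on UNIV" using d2_phi by (rule has_sum_imp_summable)
  have inner: "((\<lambda>n. d2 cc ?z (j, n)) has_sum ?T j) UNIV" for j
  proof -
    have "(\<lambda>(x, y). d2 cc ?z (x, y)) summable_on Sigma UNIV (\<lambda>_. UNIV)" using sumd by (simp add: case_prod_beta)
    hence "(\<lambda>n. d2 cc ?z (j, n)) summable_on UNIV" using summable_on_SigmaD1[of "\<lambda>x y. d2 cc ?z (x, y)"] by blast
    hence h: "((\<lambda>n. d2 cc ?z (j, n)) has_sum infsum (\<lambda>n. d2 cc ?z (j, n)) UNIV) UNIV" by (rule has_sum_infsum)
    define I where "I = infsum (\<lambda>n. d2 cc ?z (j, n)) UNIV"
    have s: "(\<lambda>n. d2 cc ?z (j, n)) sums I" using has_sum_imp_sums[OF h] unfolding I_def .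
    define K where "K = cc^j / fact (2 * j)"
    define t where "t = (\<lambda>n. pochhammer (of_nat (j + 1)) n / pochhammer (of_nat (2 * j + 1)) n * ?z^n / fact n)"
    have dt: "d2 cc ?z (j, n) = K * t n" for n
    proof -
      have p1: "pochhammer (of_nat (j + 1) :: complex) n = fact (j + n) / fact j" using poch_fact[of j n] by simp
      have p2: "pochhammer (of_nat (2 * j + 1) :: complex) n = fact (2 * j + n) / fact (2 * j)" using poch_fact[of "2*j" n] by simp
      show ?thesis unfolding d2_def K_def t_def p1 p2 by (simp add: field_simps)
    qed
    have "K * hyp1F1 (of_nat (j + 1)) (of_nat (2 * j + 1)) ?z = I"
    proof (cases "K = 0")
      case True
      hence "d2 cc ?z (j, n) = 0" for n using dt by simp
      hence "I = 0" using s by (simp add: sums_iff)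
      thus ?thesis using True by simp
    next
      case False
      have "(\<lambda>n. d2 cc ?z (j, n) / K) sums (I / K)" by (rule sums_divide[OF s])
      hence "t sums (I / K)" using dt False by simp
      hence "hyp1F1 (of_nat (j + 1)) (of_nat (2 * j + 1)) ?z = I / K"
        unfolding hyp1F1_def t_def by (simp add: sums_iff)
      thus ?thesis using False by simp
    qed
    thus ?thesis using h unfolding I_def[symmetric] K_def by simp
  qed
  have "(d2 cc ?z has_sum phi N l lt u) (Sigma UNIV (\<lambda>_. UNIV))" using d2_phi by simp
  hence "(?T has_sum phi N l lt u) UNIV"
    by (rule has_sum_SigmaD) (use inner in auto)
  hence "?T sums phi N l lt u" by (rule has_sum_imp_sums)
  moreover have "?T = (\<lambda>j. 1 / fact (2 * j)
             * (- (of_real N * fst l * snd l * br u lt * brh u lt / of_real (normsq u)))^j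
             * hyp1F1 (of_nat (j + 1)) (of_nat (2 * j + 1)) (\<i> * pdx l lt u))"
    unfolding cc_MM AB_pdx[symmetric] MM_def ..
  ultimately show ?thesis by simp
qed

end

lemma G_zero: "G k z 0 = z^k"
proof -
  have "G k z 0 = (\<Sum>j\<le>k. of_nat ((k - j) choose j) * 0^j * z^(k - 2*j))" unfolding G_def ..
  also have "\<dots> = of_nat ((k - 0) choose 0) * 0^0 * z^(k - 2*0)"
    by (rule sum.mono_neutral_left[of "{..k}" "{0}", symmetric, simplified]) auto
  finally show ?thesis by simp
qed

lemma part_iii: "phi 0 l lt u = exp (\<i> * pdx l lt u)"
proof -
  have "(\<lambda>k. G k (\<i> * pdx l lt u) (- 0) / fact k) sums FF (pdx l lt u, 0)" by (rule FF_series)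
  hence "(\<lambda>k. (\<i> * pdx l lt u)^k / fact k) sums FF (pdx l lt u, 0)" by (simp add: G_zero)
  hence "FF (pdx l lt u, 0) = exp (\<i> * pdx l lt u)" using exp_series sums_unique2 by blast
  thus ?thesis unfolding phi_FF2 by simp
qed

lemma part_v: assumes "s \<noteq> 0"
  shows "phi N (s * fst l, s * snd l) (fst lt / s, snd lt / s) u = phi N l lt u"
proof -
  have p: "pdx (s * fst l, s * snd l) (fst lt / s, snd lt / s) u = pdx l lt u"
    unfolding pdx_def br_def brh_def using assms by (simp add: field_simps)
  have b1: "br u (fst lt / s, snd lt / s) = br u lt / s" unfolding br_def using assms by (simp add: field_simps)
  have b2: "brh u (fst lt / s, snd lt / s) = brh u lt / s" unfolding brh_def br_def using assms by (simp add: field_simps)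
  have m: "of_real N * fst (s * fst l, s * snd l) * snd (s * fst l, s * snd l) * (br u lt / s) * (brh u lt / s)
       = of_real N * fst l * snd l * br u lt * brh u lt" using assms by (simp add: field_simps power2_eq_square)
  have q: "Qf N (s * fst l, s * snd l) (fst lt / s, snd lt / s) u = Qf N l lt u"
    unfolding Qf_def p b1 b2 m ..
  show ?thesis unfolding phi_def p q ..
qed

lemma FF_cont: "isCont FF z"
  using hFF[of z] by (rule has_derivative_continuous)

lemma FF_0: "FF (0, M) = Cser M"
  unfolding FF_def EE_def Qz_def by simp

lemma normsq_scale: "normsq (t * a, t * b) = (cmod t)^2 * normsq (a, b)"
  unfolding normsq_def by (simp add: norm_mult power_mult_distrib algebra_simps)

lemma M_scale:
  assumes "t \<noteq> 0"
  shows "of_real N * fst l * snd l * br (t * a, t * b) lt * brh (t * a, t * b) lt / of_real (normsq (t * a, t * b))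
       = of_real N * fst l * snd l * br (a, b) lt * brh (a, b) lt / of_real (normsq (a, b))"
proof -
  have tt: "of_real ((cmod t)^2) = t * cnj t" by (rule complex_norm_square)
  have nz: "t * cnj t \<noteq> 0" using assms by simp
  have "br (t * a, t * b) lt = t * br (a, b) lt" "brh (t * a, t * b) lt = cnj t * brh (a, b) lt"
    unfolding br_def brh_def uhat_def by (simp_all add: algebra_simps)
  moreover have "of_real (normsq (t * a, t * b)) = t * cnj t * of_real (normsq (a, b))"
    unfolding normsq_scale of_real_mult tt ..
  ultimately show ?thesis using nz by (simp add: field_simps)
qed

lemma brh_eq: "brh z lt = - cnj (snd z) * fst lt + cnj (fst z) * snd lt"
  unfolding brh_def br_def uhat_def by simp

lemma pdx_scale: "pdx l lt (t * a, t * b) = t * (fst l * br (a, b) lt) + cnj t * (snd l * brh (a, b) lt)"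
  unfolding pdx_def br_def brh_def uhat_def by (simp add: algebra_simps)

lemma Mf_tendsto:
  assumes z: "\<zeta> \<noteq> 0"
  shows "((\<lambda>p. of_real N * fst l * snd l * br (snd p) lt * brh (snd p) lt / of_real (normsq (snd p)))
     \<longlongrightarrow> of_real N * fst l * snd l * br \<zeta> lt * brh \<zeta> lt / of_real (normsq \<zeta>)) (at (t0::complex, \<zeta>) within S)"
proof -
  have nz: "(of_real (normsq \<zeta>) :: complex) \<noteq> 0" using normsq_pos[OF z] by simp
  have sn: "((\<lambda>p::complex \<times> complex \<times> complex. snd p) \<longlongrightarrow> \<zeta>) (at (t0, \<zeta>) within S)"
    using tendsto_snd[OF tendsto_ident_at[of "(t0, \<zeta>)" S]] by simp
  have c1: "((\<lambda>p::complex \<times> complex \<times> complex. fst (snd p)) \<longlongrightarrow> fst \<zeta>) (at (t0, \<zeta>) within S)"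
    using tendsto_fst[OF sn] .
  have c2: "((\<lambda>p::complex \<times> complex \<times> complex. snd (snd p)) \<longlongrightarrow> snd \<zeta>) (at (t0, \<zeta>) within S)"
    using tendsto_snd[OF sn] .
  have num: "((\<lambda>p. of_real N * fst l * snd l * br (snd p) lt * brh (snd p) lt) \<longlongrightarrow> of_real N * fst l * snd l * br \<zeta> lt * brh \<zeta> lt) (at (t0, \<zeta>) within S)"
    unfolding br_def brh_eq
    by (intro tendsto_mult tendsto_add tendsto_diff tendsto_minus tendsto_cnj tendsto_const c1 c2)
  have den: "((\<lambda>p. (of_real (normsq (snd p)) :: complex)) \<longlongrightarrow> of_real (normsq \<zeta>)) (at (t0, \<zeta>) within S)"
    unfolding normsq_def
    by (intro tendsto_of_real tendsto_add tendsto_power tendsto_norm c1 c2)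
  show ?thesis by (rule tendsto_divide[OF num den nz])
qed

lemma part_iv_joint:
  fixes N :: real and l lt \<zeta> :: "complex \<times> complex"
  assumes z: "\<zeta> \<noteq> 0"
  shows "((\<lambda>(t::complex, z). phi N l lt (t * fst z, t * snd z))
          \<longlongrightarrow> Cser (of_real N * fst l * snd l * br \<zeta> lt * brh \<zeta> lt / of_real (normsq \<zeta>)))
        (at (0, \<zeta>) within {p. fst p \<noteq> 0 \<and> snd p \<noteq> 0})"
proof -
  define Mf where "Mf = (\<lambda>z::complex \<times> complex. of_real N * fst l * snd l * br z lt * brh z lt / of_real (normsq z))"
  let ?S = "{p :: complex \<times> complex \<times> complex. fst p \<noteq> 0 \<and> snd p \<noteq> 0}"
  have t0: "((\<lambda>p::complex \<times> complex \<times> complex. fst p) \<longlongrightarrow> 0) (at (0, \<zeta>) within ?S)"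
    using tendsto_fst[OF tendsto_ident_at[of "(0::complex, \<zeta>)" ?S]] by simp
  have sn: "((\<lambda>p::complex \<times> complex \<times> complex. snd p) \<longlongrightarrow> \<zeta>) (at (0, \<zeta>) within ?S)"
    using tendsto_snd[OF tendsto_ident_at[of "(0::complex, \<zeta>)" ?S]] by simp
  have pl: "((\<lambda>p. pdx l lt (fst p * fst (snd p), fst p * snd (snd p))) \<longlongrightarrow> 0) (at (0, \<zeta>) within ?S)"
  proof -
    have "((\<lambda>p. fst p * (fst l * br (fst (snd p), snd (snd p)) lt) + cnj (fst p) * (snd l * brh (fst (snd p), snd (snd p)) lt))
       \<longlongrightarrow> 0 * (fst l * br (fst \<zeta>, snd \<zeta>) lt) + cnj 0 * (snd l * brh (fst \<zeta>, snd \<zeta>) lt)) (at (0, \<zeta>) within ?S)"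
      unfolding br_def brh_eq fst_conv snd_conv
      by (intro tendsto_mult tendsto_add tendsto_diff tendsto_minus tendsto_cnj tendsto_const t0 tendsto_fst tendsto_snd sn)
    thus ?thesis unfolding pdx_scale by simp
  qed
  have Ml: "((\<lambda>p. Mf (snd p)) \<longlongrightarrow> Mf \<zeta>) (at (0, \<zeta>) within ?S)"
    unfolding Mf_def by (rule Mf_tendsto[OF z])
  have lim: "((\<lambda>p. FF (pdx l lt (fst p * fst (snd p), fst p * snd (snd p)), Mf (snd p))) \<longlongrightarrow> FF (0, Mf \<zeta>)) (at (0, \<zeta>) within ?S)"
    by (rule isCont_tendsto_compose[OF FF_cont tendsto_Pair[OF pl Ml]])
  have eq: "\<forall>\<^sub>F p in at (0, \<zeta>) within ?S. FF (pdx l lt (fst p * fst (snd p), fst p * snd (snd p)), Mf (snd p))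
       = (\<lambda>(t, z). phi N l lt (t * fst z, t * snd z)) p"
    unfolding eventually_at_filter
  proof (rule always_eventually, intro allI impI)
    fix p :: "complex \<times> complex \<times> complex" assume "p \<in> ?S"
    hence t: "fst p \<noteq> 0" by simp
    obtain t a b where p: "p = (t, a, b)" by (cases p) auto
    show "FF (pdx l lt (fst p * fst (snd p), fst p * snd (snd p)), Mf (snd p)) = (\<lambda>(t, z). phi N l lt (t * fst z, t * snd z)) p"
      unfolding p phi_FF2 Mf_def using M_scale[where t=t and a=a and b=b and N=N and l=l and lt=lt] t p by simp
  qed
  show ?thesis using Lim_transform_eventually[OF lim eq] unfolding Mf_def FF_0 .
qed

lemma part_iv:
  fixes N :: real and l lt \<zeta> :: "complex \<times> complex"
  assumes z: "\<zeta> \<noteq> 0"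
  shows "((\<lambda>t::complex. phi N l lt (t * fst \<zeta>, t * snd \<zeta>))
          \<longlongrightarrow> Cser (of_real N * fst l * snd l * br \<zeta> lt * brh \<zeta> lt / of_real (normsq \<zeta>))) (at 0)"
proof -
  define Mf where "Mf = of_real N * fst l * snd l * br \<zeta> lt * brh \<zeta> lt / of_real (normsq \<zeta>)"
  have pl: "((\<lambda>t::complex. pdx l lt (t * fst \<zeta>, t * snd \<zeta>)) \<longlongrightarrow> 0) (at 0)"
  proof -
    have "((\<lambda>t::complex. t * (fst l * br (fst \<zeta>, snd \<zeta>) lt) + cnj t * (snd l * brh (fst \<zeta>, snd \<zeta>) lt))
       \<longlongrightarrow> 0 * (fst l * br (fst \<zeta>, snd \<zeta>) lt) + cnj 0 * (snd l * brh (fst \<zeta>, snd \<zeta>) lt)) (at 0)"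
      by (intro tendsto_mult tendsto_add tendsto_cnj tendsto_const tendsto_ident_at)
    thus ?thesis unfolding pdx_scale by simp
  qed
  have lim: "((\<lambda>t. FF (pdx l lt (t * fst \<zeta>, t * snd \<zeta>), Mf)) \<longlongrightarrow> FF (0, Mf)) (at 0)"
    by (rule isCont_tendsto_compose[OF FF_cont tendsto_Pair[OF pl tendsto_const]])
  have eq: "\<forall>\<^sub>F t in at 0. FF (pdx l lt (t * fst \<zeta>, t * snd \<zeta>), Mf) = phi N l lt (t * fst \<zeta>, t * snd \<zeta>)"
    unfolding eventually_at_filter
  proof (rule always_eventually, intro allI impI)
    fix t :: complex assume t: "t \<noteq> 0"
    show "FF (pdx l lt (t * fst \<zeta>, t * snd \<zeta>), Mf) = phi N l lt (t * fst \<zeta>, t * snd \<zeta>)"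
      unfolding phi_FF2 Mf_def using M_scale[OF t, where a="fst \<zeta>" and b="snd \<zeta>" and N=N and l=l and lt=lt] by simp
  qed
  show ?thesis using Lim_transform_eventually[OF lim eq] unfolding Mf_def FF_0 .
qed

theorem mainTheorem6:
  fixes N :: real and l lt :: "complex \<times> complex"
  assumes "N > 0"
  shows
   "(\<forall>u. u \<noteq> 0 \<longrightarrow> burns_laplacian N (phi N l lt) u = 0)
  \<and> (\<forall>u. u \<noteq> 0 \<longrightarrow>
       ((\<lambda>(k, m). (\<i> * fst l)^k * (\<i> * snd l)^m / (fact k * fact m) * phikl N lt k m u)
          has_sum phi N l lt u) UNIV)
  \<and> (\<forall>u. u \<noteq> 0 \<longrightarrow>
       (\<lambda>j. 1 / fact (2 * j)
             * (- (of_real N * fst l * snd l * br u lt * brh u lt / of_real (normsq u)))^j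
             * hyp1F1 (of_nat (j + 1)) (of_nat (2 * j + 1)) (\<i> * pdx l lt u))
        sums phi N l lt u)
  \<and> (\<forall>u. u \<noteq> 0 \<longrightarrow> phi 0 l lt u = exp (\<i> * pdx l lt u))
  \<and> (\<forall>\<zeta>. \<zeta> \<noteq> 0 \<longrightarrow>
       ((\<lambda>t::complex. phi N l lt (t * fst \<zeta>, t * snd \<zeta>))
          \<longlongrightarrow> Cser (of_real N * fst l * snd l * br \<zeta> lt * brh \<zeta> lt / of_real (normsq \<zeta>))) (at 0))
  \<and> (\<forall>\<zeta>. \<zeta> \<noteq> 0 \<longrightarrow>
       ((\<lambda>(t::complex, z). phi N l lt (t * fst z, t * snd z))
          \<longlongrightarrow> Cser (of_real N * fst l * snd l * br \<zeta> lt * brh \<zeta> lt / of_real (normsq \<zeta>)))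
        (at (0, \<zeta>) within {p. fst p \<noteq> 0 \<and> snd p \<noteq> 0}))
  \<and> (\<forall>s u. s \<noteq> 0 \<longrightarrow> u \<noteq> 0 \<longrightarrow>
       phi N (s * fst l, s * snd l) (fst lt / s, snd lt / s) u = phi N l lt u)"
proof (intro conjI allI impI)
  fix u :: "complex \<times> complex" assume "u \<noteq> 0"
  thus "burns_laplacian N (phi N l lt) u = 0" by (rule part_i)
next
  fix u :: "complex \<times> complex"
  show "((\<lambda>(k, m). (\<i> * fst l)^k * (\<i> * snd l)^m / (fact k * fact m) * phikl N lt k m u)
          has_sum phi N l lt u) UNIV" by (rule part_iia)
next
  fix u :: "complex \<times> complex"
  show "(\<lambda>j. 1 / fact (2 * j)
             * (- (of_real N * fst l * snd l * br u lt * brh u lt / of_real (normsq u)))^j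
             * hyp1F1 (of_nat (j + 1)) (of_nat (2 * j + 1)) (\<i> * pdx l lt u))
        sums phi N l lt u" by (rule part_iib)
next
  fix u :: "complex \<times> complex"
  show "phi 0 l lt u = exp (\<i> * pdx l lt u)" by (rule part_iii)
next
  fix \<zeta> :: "complex \<times> complex" assume "\<zeta> \<noteq> 0"
  thus "((\<lambda>t::complex. phi N l lt (t * fst \<zeta>, t * snd \<zeta>))
          \<longlongrightarrow> Cser (of_real N * fst l * snd l * br \<zeta> lt * brh \<zeta> lt / of_real (normsq \<zeta>))) (at 0)"
    by (rule part_iv)
next
  fix \<zeta> :: "complex \<times> complex" assume "\<zeta> \<noteq> 0"
  thus "((\<lambda>(t::complex, z). phi N l lt (t * fst z, t * snd z))
          \<longlongrightarrow> Cser (of_real N * fst l * snd l * br \<zeta> lt * brh \<zeta> lt / of_real (normsq \<zeta>)))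
        (at (0, \<zeta>) within {p. fst p \<noteq> 0 \<and> snd p \<noteq> 0})"
    by (rule part_iv_joint)
next
  fix s :: complex and u :: "complex \<times> complex" assume "s \<noteq> 0"
  thus "phi N (s * fst l, s * snd l) (fst lt / s, snd lt / s) u = phi N l lt u" by (rule part_v)
qed

end
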